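(* Let $\ell$ be a nondegenerate Hermitian form on a complex $n$-dimensional space $W$, $A$ an $\ell$-self-adjoint antilinear operator, $\lambda^2>0$ an eigenvalue of $A^2$, and $W_\lambda^{(n)}=\ker(A^2-\lambda^2 I)^n$. Suppose the restriction of $A^2$ to $W_\lambda^{(n)}$ has Jordan canonical form with exactly $r_i$ Jordan blocks of size $s_i\times s_i$ ($i=1,\dots,n_\lambda$, $s_1>s_2>\dots>s_{n_\lambda}$). Then there is a basis of $W_\lambda^{(n)}$ with respect to which the restrictions of $\ell$ and $A$ to $W_\lambda^{(n)}$ are represented by $$\bigoplus_{i=1}^{n_\lambda}\bigoplus_{j=1}^{r_i}\epsilon_{i,j}S_{s_i}\quad\text{and}\quad\bigoplus_{i=1}^{n_\lambda}\bigoplus_{j=1}^{r_i}J_{|\lambda|,s_i},$$ respectively, for some signs $\epsilon_{i,j}\in\{1,-1\}$.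
   Context: An antilinear operator satisfies $A(zv+w)=\bar zAv+Aw$; $\ell$ is linear in the first argument and conjugate-linear in the second; $A$ is $\ell$-self-adjoint if $\ell(Av,w)=\ell(Aw,v)$. The subspace $W_\lambda^{(n)}$ is $A$-invariant. In a basis $e_1,\dots,e_k$, $\ell$ is represented by $H_{i,j}=\ell(e_j,e_i)$ and $A$ by $C$ with $Ae_i=\sum_m C_{m,i}e_m$. $\bigoplus$ denotes block diagonal matrices. $S_k$ has $(i,j)$ entry $1$ if $i+j=k+1$, else $0$; $J_{\mu,k}=\mu I_k+T_k$ with $T_k$ having $(i,j)$ entry $1$ if $j-i=1$, else $0$. *)

theory Defs
  imports "Jordan_Normal_Form.Jordan_Normal_Form"
begin

text \<open>The complex n-dimensional space W is modelled as carrier_vec n (column vectors in C^n).\<close>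

definition hermitian_form :: "nat \<Rightarrow> (complex vec \<Rightarrow> complex vec \<Rightarrow> complex) \<Rightarrow> bool" where
  "hermitian_form n l \<longleftrightarrow>
     (\<forall>u\<in>carrier_vec n. \<forall>v\<in>carrier_vec n. \<forall>w\<in>carrier_vec n. \<forall>z::complex.
        l (z \<cdot>\<^sub>v u + v) w = z * l u w + l v w \<and>
        l w (z \<cdot>\<^sub>v u + v) = cnj z * l w u + l w v) \<and>
     (\<forall>u\<in>carrier_vec n. \<forall>v\<in>carrier_vec n. l u v = cnj (l v u))"

definition nondegenerate :: "nat \<Rightarrow> (complex vec \<Rightarrow> complex vec \<Rightarrow> complex) \<Rightarrow> bool" where
  "nondegenerate n l \<longleftrightarrow>
     (\<forall>u\<in>carrier_vec n. (\<forall>w\<in>carrier_vec n. l u w = 0) \<longrightarrow> u = 0\<^sub>v n)"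

definition antilinear_op :: "nat \<Rightarrow> (complex vec \<Rightarrow> complex vec) \<Rightarrow> bool" where
  "antilinear_op n A \<longleftrightarrow>
     (\<forall>u\<in>carrier_vec n. A u \<in> carrier_vec n) \<and>
     (\<forall>u\<in>carrier_vec n. \<forall>v\<in>carrier_vec n. \<forall>z::complex.
        A (z \<cdot>\<^sub>v u + v) = cnj z \<cdot>\<^sub>v A u + A v)"

definition self_adjoint_wrt :: "nat \<Rightarrow> (complex vec \<Rightarrow> complex vec \<Rightarrow> complex) \<Rightarrow> (complex vec \<Rightarrow> complex vec) \<Rightarrow> bool" where
  "self_adjoint_wrt n l A \<longleftrightarrow> (\<forall>v\<in>carrier_vec n. \<forall>w\<in>carrier_vec n. l (A v) w = l (A w) v)"

definition gen_eigenspace :: "nat \<Rightarrow> (complex vec \<Rightarrow> complex vec) \<Rightarrow> complex \<Rightarrow> complex vec set" where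
  "gen_eigenspace n A mu =
     {v \<in> carrier_vec n. ((\<lambda>u. A (A u) - mu \<cdot>\<^sub>v u) ^^ n) v = 0\<^sub>v n}"

definition lin_comb :: "nat \<Rightarrow> complex vec list \<Rightarrow> complex vec \<Rightarrow> complex vec" where
  "lin_comb n es c = vec n (\<lambda>t. \<Sum>i<length es. c $ i * (es ! i) $ t)"

definition is_basis_of :: "nat \<Rightarrow> complex vec set \<Rightarrow> complex vec list \<Rightarrow> bool" where
  "is_basis_of n U es \<longleftrightarrow> set es \<subseteq> U \<and>
     (\<forall>v\<in>U. \<exists>!c. c \<in> carrier_vec (length es) \<and> v = lin_comb n es c)"

definition form_matrix :: "(complex vec \<Rightarrow> complex vec \<Rightarrow> complex) \<Rightarrow> complex vec list \<Rightarrow> complex mat" where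
  "form_matrix l es = mat (length es) (length es) (\<lambda>(i,j). l (es ! j) (es ! i))"

definition represents_op :: "nat \<Rightarrow> complex vec list \<Rightarrow> (complex vec \<Rightarrow> complex vec) \<Rightarrow> complex mat \<Rightarrow> bool" where
  "represents_op n es B C \<longleftrightarrow> C \<in> carrier_mat (length es) (length es) \<and>
     (\<forall>i<length es. B (es ! i) = lin_comb n es (col C i))"

text \<open>S_k: (i,j) entry 1 iff i+j = k+1 (1-based), i.e. i+j = k-1 (0-based).\<close>
definition S_mat :: "nat \<Rightarrow> complex mat" where
  "S_mat k = mat k k (\<lambda>(i,j). if i + j + 1 = k then 1 else 0)"

definition block_sizes :: "(nat \<times> nat) list \<Rightarrow> nat list" where
  "block_sizes sr = concat (map (\<lambda>(s, r). replicate r s) sr)"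

end

theory Submission
  imports Defs "HOL-Computational_Algebra.Formal_Power_Series"
begin


definition vsum :: "nat \<Rightarrow> 'i set \<Rightarrow> ('i \<Rightarrow> complex vec) \<Rightarrow> complex vec" where
  "vsum n I f = vec n (\<lambda>t. \<Sum>i\<in>I. f i $ t)"

lemma vsum_carrier[simp]: "vsum n I f \<in> carrier_vec n"
  unfolding vsum_def by simp

lemma vsum_empty[simp]: "vsum n {} f = 0\<^sub>v n"
  unfolding vsum_def by auto

lemma vsum_insert:
  assumes "finite I" "i \<notin> I" "f i \<in> carrier_vec n"
  shows "vsum n (insert i I) f = f i + vsum n I f"
  using assms unfolding vsum_def by (intro eq_vecI) auto

lemma vsum_cong: "(\<And>i. i \<in> I \<Longrightarrow> f i = g i) \<Longrightarrow> vsum n I f = vsum n I g"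
  unfolding vsum_def by auto

definition subsp :: "nat \<Rightarrow> complex vec set \<Rightarrow> bool" where
  "subsp n S \<longleftrightarrow> S \<subseteq> carrier_vec n \<and> 0\<^sub>v n \<in> S \<and> (\<forall>u\<in>S. \<forall>v\<in>S. u + v \<in> S)
     \<and> (\<forall>z. \<forall>u\<in>S. z \<cdot>\<^sub>v u \<in> S)"

lemma subspD:
  assumes "subsp n S"
  shows "S \<subseteq> carrier_vec n" "0\<^sub>v n \<in> S" "u \<in> S \<Longrightarrow> v \<in> S \<Longrightarrow> u + v \<in> S"
    "u \<in> S \<Longrightarrow> z \<cdot>\<^sub>v u \<in> S"
  using assms unfolding subsp_def by auto

lemma subsp_vsum:
  assumes S: "subsp n S" and f: "\<And>i. i \<in> I \<Longrightarrow> f i \<in> S" and fin: "finite I"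
  shows "vsum n I f \<in> S"
  using fin f
proof (induction I rule: finite_induct)
  case empty then show ?case using subspD[OF S] by simp
next
  case (insert i I)
  have fi: "f i \<in> carrier_vec n" using insert subspD(1)[OF S] by auto
  show ?case unfolding vsum_insert[of I i f n, OF insert(1,2) fi]
    using insert subspD(3)[OF S] by auto
qed

lemma additive_vsum:
  assumes S: "subsp n S" and f: "\<And>i. i \<in> I \<Longrightarrow> f i \<in> S" and fin: "finite I"
    and add: "\<And>u v. u \<in> S \<Longrightarrow> v \<in> S \<Longrightarrow> F (u + v) = F u + F v"
    and zero: "F (0\<^sub>v n) = 0\<^sub>v m"
    and Fc: "\<And>u. u \<in> S \<Longrightarrow> F u \<in> carrier_vec m"
  shows "F (vsum n I f) = vsum m I (\<lambda>i. F (f i))"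
  using fin f
proof (induction I rule: finite_induct)
  case empty then show ?case using zero by simp
next
  case (insert i I)
  have fi: "f i \<in> carrier_vec n" using insert subspD(1)[OF S] by auto
  have vs: "vsum n I f \<in> S" by (rule subsp_vsum[OF S]) (use insert in auto)
  have "F (vsum n (insert i I) f) = F (f i) + F (vsum n I f)"
    unfolding vsum_insert[of I i f n, OF insert(1,2) fi]
    using insert vs add by auto
  also have "\<dots> = vsum m (insert i I) (\<lambda>i. F (f i))"
    using insert Fc by (subst vsum_insert) auto
  finally show ?case .
qed

lemma sum_additive_vsum:
  assumes S: "subsp n S" and f: "\<And>i. i \<in> I \<Longrightarrow> f i \<in> S" and fin: "finite I"
    and add: "\<And>u v. u \<in> S \<Longrightarrow> v \<in> S \<Longrightarrow> F (u + v) = F u + F v"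
    and zero: "F (0\<^sub>v n) = (0::complex)"
  shows "F (vsum n I f) = (\<Sum>i\<in>I. F (f i))"
  using fin f
proof (induction I rule: finite_induct)
  case empty then show ?case using zero by simp
next
  case (insert i I)
  have fi: "f i \<in> carrier_vec n" using insert subspD(1)[OF S] by auto
  have vs: "vsum n I f \<in> S" by (rule subsp_vsum[OF S]) (use insert in auto)
  show ?case
    unfolding vsum_insert[of I i f n, OF insert(1,2) fi]
    using insert vs add by auto
qed

lemma subsp_carrier: "subsp n (carrier_vec n)"
  unfolding subsp_def by auto

lemma lin_comb_vsum:
  assumes "set es \<subseteq> carrier_vec n"
  shows "lin_comb n es c = vsum n {..<length es} (\<lambda>i. c $ i \<cdot>\<^sub>v es ! i)"
proof (rule eq_vecI)
  have d: "\<And>x. x < length es \<Longrightarrow> dim_vec (es ! x) = n"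
    using assms by (auto simp: nth_mem subset_iff carrier_vecD)
  fix i assume "i < dim_vec (vsum n {..<length es} (\<lambda>i. c $ i \<cdot>\<^sub>v es ! i))"
  hence i: "i < n" by (simp add: vsum_def)
  show "lin_comb n es c $ i = vsum n {..<length es} (\<lambda>i. c $ i \<cdot>\<^sub>v es ! i) $ i"
    using i by (simp add: lin_comb_def vsum_def, intro sum.cong, auto simp: d)
qed (simp add: lin_comb_def vsum_def)

lemma lin_comb_carrier[simp]: "lin_comb n es c \<in> carrier_vec n"
  unfolding lin_comb_def by simp



lemma lin_comb_index: "t < n \<Longrightarrow> lin_comb n es c $ t = (\<Sum>i<length es. c $ i * es ! i $ t)"
  unfolding lin_comb_def by simp

lemma dim_lin_comb[simp]: "dim_vec (lin_comb n es c) = n"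
  unfolding lin_comb_def by simp

lemma lin_comb_add:
  assumes "c \<in> carrier_vec (length es)" "d \<in> carrier_vec (length es)"
  shows "lin_comb n es (c + d) = lin_comb n es c + lin_comb n es d"
proof (rule eq_vecI)
  fix t assume "t < dim_vec (lin_comb n es c + lin_comb n es d)" hence t: "t < n" by simp
  have "lin_comb n es (c+d) $ t = (\<Sum>i<length es. c$i * es!i$t + d$i*es!i$t)"
    using assms t by (simp add: lin_comb_index, intro sum.cong, auto simp: distrib_right)
  then show "lin_comb n es (c + d) $ t = (lin_comb n es c + lin_comb n es d) $ t"
    using t by (simp add: lin_comb_index sum.distrib)
qed simp

lemma lin_comb_smult:
  assumes "c \<in> carrier_vec (length es)"
  shows "lin_comb n es (a \<cdot>\<^sub>v c) = a \<cdot>\<^sub>v lin_comb n es c"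
proof (rule eq_vecI)
  fix t assume "t < dim_vec (a \<cdot>\<^sub>v lin_comb n es c)" hence t: "t < n" by simp
  have "lin_comb n es (a \<cdot>\<^sub>v c) $ t = (\<Sum>i<length es. a * (c$i * es!i$t))"
    using assms t by (simp add: lin_comb_index, intro sum.cong, auto)
  then show "lin_comb n es (a \<cdot>\<^sub>v c) $ t = (a \<cdot>\<^sub>v lin_comb n es c) $ t"
    using t by (simp add: lin_comb_index sum_distrib_left)
qed simp

lemma lin_comb_zero[simp]: "lin_comb n es (0\<^sub>v (length es)) = 0\<^sub>v n"
  by (intro eq_vecI) (auto simp: lin_comb_index)

lemma lin_comb_unit:
  assumes "set es \<subseteq> carrier_vec n" "i < length es"
  shows "lin_comb n es (unit_vec (length es) i) = es ! i"
proof (rule eq_vecI)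
  have ei: "es ! i \<in> carrier_vec n" using assms by (auto simp: nth_mem subset_iff)
  fix t assume "t < dim_vec (es ! i)" hence t: "t < n" using ei by auto
  have "lin_comb n es (unit_vec (length es) i) $ t = (\<Sum>j<length es. (if j = i then es ! i $ t else 0))"
    unfolding lin_comb_index[OF t] using assms(2) by (intro sum.cong) auto
  also have "\<dots> = es ! i $ t" using assms(2) by simp
  finally show "lin_comb n es (unit_vec (length es) i) $ t = es ! i $ t" .
qed (use assms in \<open>auto simp: lin_comb_def intro!: carrier_vecD[symmetric]\<close>)

lemma sum_split_add: "(\<Sum>i<a+(b::nat). f i) = (\<Sum>i<a. f i) + (\<Sum>i<b. f (a+i))"
  by (induction b) (auto simp: add.assoc)

lemma lin_comb_append:
  "lin_comb n (xs @ ys) c = lin_comb n xs (vec (length xs) (\<lambda>i. c $ i))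
      + lin_comb n ys (vec (length ys) (\<lambda>i. c $ (length xs + i)))"
proof (rule eq_vecI)
  fix t assume "t < dim_vec (lin_comb n xs (vec (length xs) (($) c)) +
               lin_comb n ys (vec (length ys) (\<lambda>i. c $ (length xs + i))))"
  hence t: "t < n" by (simp add: lin_comb_def)
  have "lin_comb n (xs @ ys) c $ t = (\<Sum>i<length xs + length ys. c $ i * (xs @ ys) ! i $ t)"
    using t by (simp add: lin_comb_index)
  also have "\<dots> = (\<Sum>i<length xs. c $ i * (xs @ ys) ! i $ t) +
      (\<Sum>i<length ys. c $ (length xs + i) * (xs @ ys) ! (length xs + i) $ t)"
    by (rule sum_split_add)
  also have "\<dots> = (\<Sum>i<length xs. c $ i * xs ! i $ t) +
      (\<Sum>i<length ys. c $ (length xs + i) * ys ! i $ t)"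
    by (auto intro!: sum.cong simp: nth_append)
  finally show "lin_comb n (xs @ ys) c $ t = (lin_comb n xs (vec (length xs) (\<lambda>i. c $ i))
      + lin_comb n ys (vec (length ys) (\<lambda>i. c $ (length xs + i)))) $ t"
    using t by (simp add: lin_comb_index)
qed (simp add: lin_comb_def)

lemma lin_comb_append_vec:
  assumes "c1 \<in> carrier_vec (length xs)" "c2 \<in> carrier_vec (length ys)"
  shows "lin_comb n (xs @ ys) (c1 @\<^sub>v c2) = lin_comb n xs c1 + lin_comb n ys c2"
proof -
  have 1: "vec (length xs) (\<lambda>i. (c1 @\<^sub>v c2) $ i) = c1"
    using assms by (intro eq_vecI) (auto simp: index_append_vec)
  have 2: "vec (length ys) (\<lambda>i. (c1 @\<^sub>v c2) $ (length xs + i)) = c2"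
    using assms by (intro eq_vecI) (auto simp: index_append_vec)
  show ?thesis unfolding lin_comb_append 1 2 ..
qed

lemma lin_comb_in_subsp:
  assumes S: "subsp n S" and es: "set es \<subseteq> S"
  shows "lin_comb n es c \<in> S"
proof -
  have "set es \<subseteq> carrier_vec n" using es subspD(1)[OF S] by auto
  then have eq: "lin_comb n es c = vsum n {..<length es} (\<lambda>i. c $ i \<cdot>\<^sub>v es ! i)"
    by (rule lin_comb_vsum)
  have "vsum n {..<length es} (\<lambda>i. c $ i \<cdot>\<^sub>v es ! i) \<in> S"
    using es by (intro subsp_vsum[OF S]) (auto intro!: subspD(4)[OF S] simp: nth_mem subset_iff)
  then show ?thesis using eq by simp
qed

subsection \<open>Hermitian forms\<close>

lemma herm_H1: "hermitian_form n l \<Longrightarrow> u \<in> carrier_vec n \<Longrightarrow> v \<in> carrier_vec n \<Longrightarrow>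
   w \<in> carrier_vec n \<Longrightarrow> l (z \<cdot>\<^sub>v u + v) w = z * l u w + l v w"
  unfolding hermitian_form_def by blast

lemma herm_H2: "hermitian_form n l \<Longrightarrow> u \<in> carrier_vec n \<Longrightarrow> v \<in> carrier_vec n \<Longrightarrow>
   w \<in> carrier_vec n \<Longrightarrow> l w (z \<cdot>\<^sub>v u + v) = cnj z * l w u + l w v"
  unfolding hermitian_form_def by blast

lemma herm_add1: "hermitian_form n l \<Longrightarrow> u \<in> carrier_vec n \<Longrightarrow> v \<in> carrier_vec n \<Longrightarrow>
   w \<in> carrier_vec n \<Longrightarrow> l (u + v) w = l u w + l v w"
  using herm_H1[of n l u v w 1] by simp

lemma herm_add2: "hermitian_form n l \<Longrightarrow> u \<in> carrier_vec n \<Longrightarrow> v \<in> carrier_vec n \<Longrightarrow>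
   w \<in> carrier_vec n \<Longrightarrow> l w (u + v) = l w u + l w v"
  using herm_H2[of n l u v w 1] by simp

lemma herm_zero1: "hermitian_form n l \<Longrightarrow> w \<in> carrier_vec n \<Longrightarrow> l (0\<^sub>v n) w = 0"
  using herm_add1[of n l "0\<^sub>v n" "0\<^sub>v n" w] by simp

lemma herm_zero2: "hermitian_form n l \<Longrightarrow> w \<in> carrier_vec n \<Longrightarrow> l w (0\<^sub>v n) = 0"
  using herm_add2[of n l "0\<^sub>v n" "0\<^sub>v n" w] by simp

lemma herm_smult1: "hermitian_form n l \<Longrightarrow> u \<in> carrier_vec n \<Longrightarrow> w \<in> carrier_vec n \<Longrightarrow>
   l (z \<cdot>\<^sub>v u) w = z * l u w"
  using herm_H1[of n l u "0\<^sub>v n" w z] herm_zero1[of n l w] by simp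

lemma herm_smult2: "hermitian_form n l \<Longrightarrow> u \<in> carrier_vec n \<Longrightarrow> w \<in> carrier_vec n \<Longrightarrow>
   l w (z \<cdot>\<^sub>v u) = cnj z * l w u"
  using herm_H2[of n l u "0\<^sub>v n" w z] herm_zero2[of n l w] by simp

lemma herm_sym: "hermitian_form n l \<Longrightarrow> u \<in> carrier_vec n \<Longrightarrow> w \<in> carrier_vec n \<Longrightarrow>
   l u w = cnj (l w u)"
  unfolding hermitian_form_def by blast

lemma herm_lin_comb1:
  assumes h: "hermitian_form n l" and es: "set es \<subseteq> carrier_vec n" and w: "w \<in> carrier_vec n"
  shows "l (lin_comb n es c) w = (\<Sum>i<length es. c $ i * l (es ! i) w)"
proof -
  have "l (lin_comb n es c) w = (\<Sum>i<length es. l (c $ i \<cdot>\<^sub>v es ! i) w)"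
    unfolding lin_comb_vsum[OF es]
    by (rule sum_additive_vsum[OF subsp_carrier]) (use es w in \<open>auto simp: nth_mem subset_iff herm_add1[OF h] herm_zero1[OF h]\<close>)
  also have "\<dots> = (\<Sum>i<length es. c $ i * l (es ! i) w)"
    using es w by (intro sum.cong) (auto simp: herm_smult1[OF h] nth_mem subset_iff)
  finally show ?thesis .
qed

lemma herm_lin_comb2:
  assumes h: "hermitian_form n l" and es: "set es \<subseteq> carrier_vec n" and w: "w \<in> carrier_vec n"
  shows "l w (lin_comb n es c) = (\<Sum>i<length es. cnj (c $ i) * l w (es ! i))"
proof -
  have "l w (lin_comb n es c) = (\<Sum>i<length es. l w (c $ i \<cdot>\<^sub>v es ! i))"
    unfolding lin_comb_vsum[OF es]
    by (rule sum_additive_vsum[OF subsp_carrier, where F="\<lambda>x. l w x"]) (use es w in \<open>auto simp: nth_mem subset_iff herm_add2[OF h] herm_zero2[OF h]\<close>)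
  also have "\<dots> = (\<Sum>i<length es. cnj (c $ i) * l w (es ! i))"
    using es w by (intro sum.cong) (auto simp: herm_smult2[OF h] nth_mem subset_iff)
  finally show ?thesis .
qed



subsection \<open>Linear and antilinear maps on subspaces\<close>

definition lin_on :: "nat \<Rightarrow> complex vec set \<Rightarrow> (complex vec \<Rightarrow> complex vec) \<Rightarrow> bool" where
  "lin_on n S F \<longleftrightarrow> (\<forall>u\<in>S. F u \<in> S) \<and> (\<forall>u\<in>S. \<forall>v\<in>S. F (u + v) = F u + F v)
     \<and> (\<forall>z. \<forall>u\<in>S. F (z \<cdot>\<^sub>v u) = z \<cdot>\<^sub>v F u)"

definition alin_on :: "nat \<Rightarrow> complex vec set \<Rightarrow> (complex vec \<Rightarrow> complex vec) \<Rightarrow> bool" where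
  "alin_on n S F \<longleftrightarrow> (\<forall>u\<in>S. F u \<in> S) \<and> (\<forall>u\<in>S. \<forall>v\<in>S. F (u + v) = F u + F v)
     \<and> (\<forall>z. \<forall>u\<in>S. F (z \<cdot>\<^sub>v u) = cnj z \<cdot>\<^sub>v F u)"

lemma lin_onD:
  assumes "lin_on n S F"
  shows "u \<in> S \<Longrightarrow> F u \<in> S" "u \<in> S \<Longrightarrow> v \<in> S \<Longrightarrow> F (u + v) = F u + F v"
    "u \<in> S \<Longrightarrow> F (z \<cdot>\<^sub>v u) = z \<cdot>\<^sub>v F u"
  using assms unfolding lin_on_def by auto

lemma alin_onD:
  assumes "alin_on n S F"
  shows "u \<in> S \<Longrightarrow> F u \<in> S" "u \<in> S \<Longrightarrow> v \<in> S \<Longrightarrow> F (u + v) = F u + F v"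
    "u \<in> S \<Longrightarrow> F (z \<cdot>\<^sub>v u) = cnj z \<cdot>\<^sub>v F u"
  using assms unfolding alin_on_def by auto

lemma smult0_vec: "(x::complex vec) \<in> carrier_vec n \<Longrightarrow> 0 \<cdot>\<^sub>v x = 0\<^sub>v n"
  by (intro eq_vecI) auto

lemma lin_on_zero:
  assumes S: "subsp n S" and F: "lin_on n S F"
  shows "F (0\<^sub>v n) = 0\<^sub>v n"
proof -
  have "F (0\<^sub>v n) = F (0 \<cdot>\<^sub>v 0\<^sub>v n)"
  proof -
    have "0 \<cdot>\<^sub>v (0\<^sub>v n) = (0\<^sub>v n :: complex vec)" by (intro eq_vecI) auto
    thus ?thesis by simp
  qed
  also have "\<dots> = 0 \<cdot>\<^sub>v F (0\<^sub>v n)" using lin_onD(3)[OF F subspD(2)[OF S]] .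
  also have "\<dots> = 0\<^sub>v n" using lin_onD(1)[OF F subspD(2)[OF S]] subspD(1)[OF S] smult0_vec by auto
  finally show ?thesis .
qed

lemma alin_on_zero:
  assumes S: "subsp n S" and F: "alin_on n S F"
  shows "F (0\<^sub>v n) = 0\<^sub>v n"
proof -
  have "F (0\<^sub>v n) = F (0 \<cdot>\<^sub>v 0\<^sub>v n)"
  proof -
    have "0 \<cdot>\<^sub>v (0\<^sub>v n) = (0\<^sub>v n :: complex vec)" by (intro eq_vecI) auto
    thus ?thesis by simp
  qed
  also have "\<dots> = 0 \<cdot>\<^sub>v F (0\<^sub>v n)" using alin_onD(3)[OF F subspD(2)[OF S]] by simp
  also have "\<dots> = 0\<^sub>v n" using alin_onD(1)[OF F subspD(2)[OF S]] subspD(1)[OF S] smult0_vec by auto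
  finally show ?thesis .
qed

lemma lin_on_lin_comb:
  assumes S: "subsp n S" and F: "lin_on n S F" and es: "set es \<subseteq> S"
  shows "F (lin_comb n es c) = lin_comb n (map F es) c"
proof -
  have esc: "set es \<subseteq> carrier_vec n" using es subspD(1)[OF S] by auto
  have Fes: "set (map F es) \<subseteq> carrier_vec n" using es lin_onD(1)[OF F] subspD(1)[OF S] by auto
  have "F (lin_comb n es c) = vsum n {..<length es} (\<lambda>i. F (c $ i \<cdot>\<^sub>v es ! i))"
    unfolding lin_comb_vsum[OF esc]
    by (rule additive_vsum[OF S]) (use es in \<open>auto intro!: subspD(4)[OF S] lin_onD(2)[OF F]
      lin_on_zero[OF S F] simp: nth_mem subset_iff  intro: lin_onD(1)[OF F] subspD(1)[OF S, THEN subsetD]\<close>)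
  also have "\<dots> = vsum n {..<length es} (\<lambda>i. c $ i \<cdot>\<^sub>v (map F es) ! i)"
    using es by (intro vsum_cong) (auto simp: lin_onD(3)[OF F] nth_mem subset_iff)
  also have "\<dots> = lin_comb n (map F es) c" unfolding lin_comb_vsum[OF Fes] by simp
  finally show ?thesis .
qed

lemma alin_on_lin_comb:
  assumes S: "subsp n S" and F: "alin_on n S F" and es: "set es \<subseteq> S"
  shows "F (lin_comb n es c) = lin_comb n (map F es) (vec (length es) (\<lambda>i. cnj (c $ i)))"
proof -
  have esc: "set es \<subseteq> carrier_vec n" using es subspD(1)[OF S] by auto
  have Fes: "set (map F es) \<subseteq> carrier_vec n" using es alin_onD(1)[OF F] subspD(1)[OF S] by auto
  have "F (lin_comb n es c) = vsum n {..<length es} (\<lambda>i. F (c $ i \<cdot>\<^sub>v es ! i))"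
    unfolding lin_comb_vsum[OF esc]
    by (rule additive_vsum[OF S]) (use es in \<open>auto intro!: subspD(4)[OF S] alin_onD(2)[OF F]
      alin_on_zero[OF S F] simp: nth_mem subset_iff  intro: alin_onD(1)[OF F] subspD(1)[OF S, THEN subsetD]\<close>)
  also have "\<dots> = vsum n {..<length es} (\<lambda>i. cnj (c $ i) \<cdot>\<^sub>v (map F es) ! i)"
    using es by (intro vsum_cong) (auto simp: alin_onD(3)[OF F] nth_mem subset_iff)
  also have "\<dots> = lin_comb n (map F es) (vec (length es) (\<lambda>i. cnj (c $ i)))" unfolding lin_comb_vsum[OF Fes] length_map
    by (intro vsum_cong) simp
  finally show ?thesis .
qed

lemma many_vecs_dep:
  assumes vs: "set vs \<subseteq> carrier_vec n" and len: "length vs > n"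
  shows "\<exists>c\<in>carrier_vec (length vs). c \<noteq> 0\<^sub>v (length vs) \<and> lin_comb n vs c = 0\<^sub>v n"
proof -
  define m where "m = length vs"
  define M :: "complex mat" where "M = mat m m (\<lambda>(i,j). if j < n then vs ! i $ j else 0)"
  have M: "M \<in> carrier_mat m m" unfolding M_def by auto
  have "M *\<^sub>v unit_vec m n = 0\<^sub>v m"
    using len unfolding m_def
    by (intro eq_vecI) (auto simp: M_def m_def scalar_prod_def unit_vec_def intro!: sum.neutral)
  moreover have "unit_vec m n \<noteq> 0\<^sub>v m" using len m_def by simp
  ultimately have "det M = 0" using det_0_iff_vec_prod_zero[OF M]
    by (metis unit_vec_carrier)
  hence "det (transpose_mat M) = 0" using det_transpose[OF M] by simp
  then obtain c where c: "c \<in> carrier_vec m" "c \<noteq> 0\<^sub>v m" "transpose_mat M *\<^sub>v c = 0\<^sub>v m"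
    using det_0_iff_vec_prod_zero[of "transpose_mat M" m] M by auto
  have "lin_comb n vs c = 0\<^sub>v n"
  proof (rule eq_vecI)
    fix t assume "t < dim_vec (0\<^sub>v n :: complex vec)" hence t: "t < n" by simp
    have tm: "t < m" using t len m_def by simp
    have "(transpose_mat M *\<^sub>v c) $ t = 0" using c(3) tm by simp
    hence "(\<Sum>i<m. c $ i * vs ! i $ t) = 0"
      using t tm c(1) unfolding M_def
      by (auto simp: scalar_prod_def lessThan_atLeast0 mult.commute intro!: sum.cong)
    thus "lin_comb n vs c $ t = 0\<^sub>v n $ t" using t m_def by (simp add: lin_comb_index)
  qed (simp add: lin_comb_def)
  thus ?thesis using c m_def by auto
qed

definition indep :: "nat \<Rightarrow> complex vec list \<Rightarrow> bool" where
  "indep n es \<longleftrightarrow> (\<forall>c\<in>carrier_vec (length es). lin_comb n es c = 0\<^sub>v n \<longrightarrow> c = 0\<^sub>v (length es))"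

lemma indep_length:
  assumes "set es \<subseteq> carrier_vec n" "indep n es"
  shows "length es \<le> n"
  using many_vecs_dep[OF assms(1)] assms(2) unfolding indep_def by force

lemma lin_comb_lin_comb:
  assumes ys: "set ys \<subseteq> carrier_vec n" and Cs: "\<And>i. i < p \<Longrightarrow> Cs i \<in> carrier_vec q"
    and q: "q = length ys"
  shows "lin_comb n (map (\<lambda>i. lin_comb n ys (Cs i)) [0..<p]) a
     = lin_comb n ys (lin_comb q (map Cs [0..<p]) a)"
proof (rule eq_vecI)
  fix t assume "t < dim_vec (lin_comb n ys (lin_comb q (map Cs [0..<p]) a))"
  hence t: "t < n" by (simp add: lin_comb_def)
  have "lin_comb n (map (\<lambda>i. lin_comb n ys (Cs i)) [0..<p]) a $ t
     = (\<Sum>i<p. a $ i * (\<Sum>j<length ys. Cs i $ j * ys ! j $ t))"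
    using t by (simp add: lin_comb_index)
  also have "\<dots> = (\<Sum>j<length ys. (\<Sum>i<p. a $ i * Cs i $ j) * ys ! j $ t)"
    by (simp add: sum_distrib_left sum_distrib_right mult.assoc mult.left_commute sum.swap[of _ "{..<p}"])
  also have "\<dots> = lin_comb n ys (lin_comb q (map Cs [0..<p]) a) $ t"
    using t q by (simp add: lin_comb_index)
  finally show "lin_comb n (map (\<lambda>i. lin_comb n ys (Cs i)) [0..<p]) a $ t
     = lin_comb n ys (lin_comb q (map Cs [0..<p]) a) $ t" .
qed (simp add: lin_comb_def)

lemma indep_span_le:
  assumes xs: "set xs \<subseteq> carrier_vec n" and ind: "indep n xs"
    and ys: "set ys \<subseteq> carrier_vec n"
    and span: "\<And>x. x \<in> set xs \<Longrightarrow> \<exists>c\<in>carrier_vec (length ys). x = lin_comb n ys c"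
  shows "length xs \<le> length ys"
proof (rule ccontr)
  assume "\<not> ?thesis" hence gt: "length xs > length ys" by simp
  define p where "p = length xs"
  define q where "q = length ys"
  have "\<forall>i<p. \<exists>c\<in>carrier_vec q. xs ! i = lin_comb n ys c"
    using span unfolding p_def q_def by (auto simp: nth_mem)
  then obtain Cs where Cs: "\<And>i. i < p \<Longrightarrow> Cs i \<in> carrier_vec q \<and> xs ! i = lin_comb n ys (Cs i)"
    by metis
  have xs_eq: "xs = map (\<lambda>i. lin_comb n ys (Cs i)) [0..<p]"
    unfolding p_def by (rule nth_equalityI) (use Cs p_def in auto)
  have "set (map Cs [0..<p]) \<subseteq> carrier_vec q" using Cs by auto
  from many_vecs_dep[OF this] gt
  obtain a where a: "a \<in> carrier_vec p" "a \<noteq> 0\<^sub>v p" "lin_comb q (map Cs [0..<p]) a = 0\<^sub>v q"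
    unfolding p_def q_def by auto
  have "lin_comb n xs a = lin_comb n ys (lin_comb q (map Cs [0..<p]) a)"
    unfolding xs_eq by (rule lin_comb_lin_comb[OF ys]) (use Cs q_def in auto)
  also have "\<dots> = 0\<^sub>v n" using a(3) q_def by simp
  finally have "lin_comb n xs a = 0\<^sub>v n" .
  with ind a show False unfolding indep_def p_def by auto
qed

lemma ex1_uniq: "\<exists>!x. P x \<Longrightarrow> P a \<Longrightarrow> P b \<Longrightarrow> a = b" by blast

lemma basis_indep:
  assumes "is_basis_of n Y es" "0\<^sub>v n \<in> Y"
  shows "indep n es"
  unfolding indep_def
proof (intro ballI impI)
  fix c assume c: "c \<in> carrier_vec (length es)" "lin_comb n es c = 0\<^sub>v n"
  have "\<exists>!c. c \<in> carrier_vec (length es) \<and> 0\<^sub>v n = lin_comb n es c"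
    using assms unfolding is_basis_of_def by auto
  moreover have "0\<^sub>v (length es) \<in> carrier_vec (length es) \<and> 0\<^sub>v n = lin_comb n es (0\<^sub>v (length es))"
    by simp
  ultimately show "c = 0\<^sub>v (length es)" using c ex1_uniq by metis
qed

lemma basisI:
  assumes S: "set es \<subseteq> Y" "set es \<subseteq> carrier_vec n" and ind: "indep n es"
    and span: "\<And>v. v \<in> Y \<Longrightarrow> \<exists>c\<in>carrier_vec (length es). v = lin_comb n es c"
  shows "is_basis_of n Y es"
  unfolding is_basis_of_def
proof (intro conjI ballI S(1))
  fix v assume v: "v \<in> Y"
  then obtain c where c: "c \<in> carrier_vec (length es)" "v = lin_comb n es c" using span by auto
  show "\<exists>!c. c \<in> carrier_vec (length es) \<and> v = lin_comb n es c"
  proof (rule ex1I[of _ c])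
    fix d assume d: "d \<in> carrier_vec (length es) \<and> v = lin_comb n es d"
    have "lin_comb n es (d + (-1) \<cdot>\<^sub>v c) = lin_comb n es c + (-1) \<cdot>\<^sub>v lin_comb n es c"
      using c d by (simp add: lin_comb_add lin_comb_smult)
    also have "\<dots> = 0\<^sub>v n" by (intro eq_vecI) auto
    finally have "lin_comb n es (d + (-1) \<cdot>\<^sub>v c) = 0\<^sub>v n" .
    hence "d + (-1) \<cdot>\<^sub>v c = 0\<^sub>v (length es)" using ind d c unfolding indep_def by auto
    hence "\<And>i. i < length es \<Longrightarrow> d $ i + (-1) * c $ i = 0"
      using c d by (metis carrier_vecD index_add_vec(1) index_smult_vec(1,2) index_zero_vec(1))
    thus "d = c" using c d by (intro eq_vecI) auto
  qed (use c in auto)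
qed



lemma vec_diff_eq0:
  "(x::complex vec) \<in> carrier_vec n \<Longrightarrow> y \<in> carrier_vec n \<Longrightarrow> x + (-1) \<cdot>\<^sub>v y = 0\<^sub>v n \<Longrightarrow> x = y"
  by (metis (no_types, lifting) carrier_vecD eq_vecI index_add_vec(1) index_smult_vec(1,2) index_zero_vec(1)
      add_minus_cancel mult_minus1 add.commute neg_equal_iff_equal add.right_neutral minus_add_cancel)

locale setting =
  fixes n :: nat and l :: "complex vec \<Rightarrow> complex vec \<Rightarrow> complex"
    and A :: "complex vec \<Rightarrow> complex vec" and lam :: real
  assumes herm: "hermitian_form n l"
    and nondeg: "nondegenerate n l"
    and anti: "antilinear_op n A"
    and sa: "self_adjoint_wrt n l A"
    and pos: "lam\<^sup>2 > 0"
begin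

definition mu :: complex where "mu = complex_of_real (lam\<^sup>2)"

definition T :: "complex vec \<Rightarrow> complex vec" where "T v = A (A v) - mu \<cdot>\<^sub>v v"

definition U :: "complex vec set" where "U = gen_eigenspace n A mu"

lemma cnj_mu[simp]: "cnj mu = mu" unfolding mu_def by simp

lemma mu_nz: "mu \<noteq> 0" using pos unfolding mu_def by simp

lemma A_carrier[simp]: "u \<in> carrier_vec n \<Longrightarrow> A u \<in> carrier_vec n"
  using anti unfolding antilinear_op_def by auto

lemma A_dim[simp]: "u \<in> carrier_vec n \<Longrightarrow> dim_vec (A u) = n"
  using A_carrier carrier_vecD by blast

lemma A_H: "u \<in> carrier_vec n \<Longrightarrow> v \<in> carrier_vec n \<Longrightarrow> A (z \<cdot>\<^sub>v u + v) = cnj z \<cdot>\<^sub>v A u + A v"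
  using anti unfolding antilinear_op_def by blast

lemma A_add: "u \<in> carrier_vec n \<Longrightarrow> v \<in> carrier_vec n \<Longrightarrow> A (u + v) = A u + A v"
  using A_H[of u v 1] by simp

lemma A_zero[simp]: "A (0\<^sub>v n) = 0\<^sub>v n"
proof -
  have "A (0\<^sub>v n) = A (0\<^sub>v n) + A (0\<^sub>v n)" using A_add[of "0\<^sub>v n" "0\<^sub>v n"] by simp
  moreover have c: "A (0\<^sub>v n) \<in> carrier_vec n" by simp
  ultimately show ?thesis
  proof (intro eq_vecI)
    fix i assume e: "A (0\<^sub>v n) = A (0\<^sub>v n) + A (0\<^sub>v n)" and "i < dim_vec (0\<^sub>v n :: complex vec)"
    hence i: "i < n" by simp
    have "A (0\<^sub>v n) $ i = A (0\<^sub>v n) $ i + A (0\<^sub>v n) $ i"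
      using arg_cong[OF e, of "\<lambda>v. v $ i"] i c by simp
    thus "A (0\<^sub>v n) $ i = 0\<^sub>v n $ i" using i by simp
  qed simp
qed

lemma A_smult: "u \<in> carrier_vec n \<Longrightarrow> A (z \<cdot>\<^sub>v u) = cnj z \<cdot>\<^sub>v A u"
  using A_H[of u "0\<^sub>v n" z] by simp

lemma alin_A: "alin_on n (carrier_vec n) A"
  unfolding alin_on_def using A_add A_smult by auto

lemma T_carrier[simp]: "u \<in> carrier_vec n \<Longrightarrow> T u \<in> carrier_vec n"
  unfolding T_def by simp

lemma lin_T: "lin_on n (carrier_vec n) T"
  unfolding lin_on_def
proof (intro conjI ballI allI)
  fix u v :: "complex vec" assume u: "u \<in> carrier_vec n" and v: "v \<in> carrier_vec n"
  show "T (u + v) = T u + T v" unfolding T_def using u v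
    by (simp add: A_add) (intro eq_vecI, auto simp: algebra_simps)
next
  fix z and u :: "complex vec" assume u: "u \<in> carrier_vec n"
  show "T (z \<cdot>\<^sub>v u) = z \<cdot>\<^sub>v T u" unfolding T_def using u
    by (simp add: A_smult) (intro eq_vecI, auto simp: algebra_simps)
qed simp

lemma lin_comp:
  assumes "lin_on n S F" "lin_on n S G" shows "lin_on n S (F \<circ> G)"
  using assms unfolding lin_on_def by auto

lemma lin_id: "lin_on n S id" unfolding lin_on_def by auto

lemma lin_pow: "lin_on n S F \<Longrightarrow> lin_on n S (F ^^ k)"
  by (induction k) (auto intro: lin_comp lin_id)

lemma lin_Tk: "lin_on n (carrier_vec n) (T ^^ k)"
  using lin_pow[OF lin_T] .

lemma Tk_carrier[simp]: "u \<in> carrier_vec n \<Longrightarrow> (T ^^ k) u \<in> carrier_vec n"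
  using lin_onD(1)[OF lin_Tk] by simp

lemma T_dim[simp]: "u \<in> carrier_vec n \<Longrightarrow> dim_vec (T u) = n"
  using T_carrier carrier_vecD by blast

lemma Tk_dim[simp]: "u \<in> carrier_vec n \<Longrightarrow> dim_vec ((T ^^ k) u) = n"
  using Tk_carrier carrier_vecD by blast

lemma Tk_zero[simp]: "(T ^^ k) (0\<^sub>v n) = 0\<^sub>v n"
  using lin_on_zero[OF subsp_carrier lin_Tk] .

lemma A_diff: "u \<in> carrier_vec n \<Longrightarrow> v \<in> carrier_vec n \<Longrightarrow> A (u - v) = A u - A v"
proof -
  assume u: "u \<in> carrier_vec n" and v: "v \<in> carrier_vec n"
  have "u - v = u + (-1) \<cdot>\<^sub>v v" using u v by (intro eq_vecI) auto
  hence "A (u - v) = A u + (-1) \<cdot>\<^sub>v A v" using u v by (simp add: A_add A_smult)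
  also have "\<dots> = A u - A v" using u v by (intro eq_vecI) auto
  finally show ?thesis .
qed

lemma T_A: "u \<in> carrier_vec n \<Longrightarrow> T (A u) = A (T u)"
  unfolding T_def by (simp add: A_diff A_smult)

lemma Tk_A: "u \<in> carrier_vec n \<Longrightarrow> (T ^^ k) (A u) = A ((T ^^ k) u)"
  by (induction k) (auto simp: T_A)

lemma U_def2: "U = {v \<in> carrier_vec n. (T ^^ n) v = 0\<^sub>v n}"
proof -
  have "(\<lambda>u. A (A u) - mu \<cdot>\<^sub>v u) = T" unfolding T_def by auto
  thus ?thesis unfolding U_def gen_eigenspace_def by simp
qed

lemma smult_zero_vec': "z \<cdot>\<^sub>v (0\<^sub>v n) = (0\<^sub>v n :: complex vec)"
  by (intro eq_vecI) auto

lemma subsp_U: "subsp n U"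
  unfolding subsp_def U_def2
proof (intro conjI ballI allI)
  fix u v assume u: "u \<in> {v \<in> carrier_vec n. (T ^^ n) v = 0\<^sub>v n}" and v: "v \<in> {v \<in> carrier_vec n. (T ^^ n) v = 0\<^sub>v n}"
  have "(T ^^ n) (u + v) = (T ^^ n) u + (T ^^ n) v" using u v lin_onD(2)[OF lin_Tk] by simp
  thus "u + v \<in> {v \<in> carrier_vec n. (T ^^ n) v = 0\<^sub>v n}" using u v by simp
next
  fix z u assume u: "u \<in> {v \<in> carrier_vec n. (T ^^ n) v = 0\<^sub>v n}"
  have "(T ^^ n) (z \<cdot>\<^sub>v u) = z \<cdot>\<^sub>v (T ^^ n) u" using u lin_onD(3)[OF lin_Tk] by simp
  thus "z \<cdot>\<^sub>v u \<in> {v \<in> carrier_vec n. (T ^^ n) v = 0\<^sub>v n}" using u smult_zero_vec' by simp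
qed auto

lemma U_carrier: "u \<in> U \<Longrightarrow> u \<in> carrier_vec n"
  unfolding U_def2 by auto

lemma A_U: "u \<in> U \<Longrightarrow> A u \<in> U"
  unfolding U_def2 by (auto simp: Tk_A)

lemma T_U: "u \<in> U \<Longrightarrow> T u \<in> U"
proof -
  assume u: "u \<in> U"
  have "(T ^^ n) (T u) = T ((T ^^ n) u)" by (simp add: funpow_swap1)
  thus ?thesis using u lin_on_zero[OF subsp_carrier lin_T] unfolding U_def2 by auto
qed

lemma Tk_U: "u \<in> U \<Longrightarrow> (T ^^ k) u \<in> U"
  by (induction k) (auto simp: T_U)

lemma l_sym: "u \<in> carrier_vec n \<Longrightarrow> w \<in> carrier_vec n \<Longrightarrow> l u w = cnj (l w u)"
  using herm_sym[OF herm] .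

lemma sa': "v \<in> carrier_vec n \<Longrightarrow> w \<in> carrier_vec n \<Longrightarrow> l (A v) w = l (A w) v"
  using sa unfolding self_adjoint_wrt_def by blast

lemma T_sa: "u \<in> carrier_vec n \<Longrightarrow> v \<in> carrier_vec n \<Longrightarrow> l (T u) v = l u (T v)"
proof -
  assume u: "u \<in> carrier_vec n" and v: "v \<in> carrier_vec n"
  have 1: "l (A (A u)) v = l (A v) (A u)" using sa'[of "A u" v] u v by simp
  have 2: "l u (A (A v)) = cnj (l (A (A v)) u)" using l_sym[of u "A (A v)"] u v by simp
  have 3: "l (A (A v)) u = l (A u) (A v)" using sa'[of "A v" u] u v by simp
  have 4: "l u (A (A v)) = l (A v) (A u)" using 2 3 l_sym[of "A v" "A u"] u v by simp
  have "T u = A (A u) + (-mu) \<cdot>\<^sub>v u" unfolding T_def using u by (intro eq_vecI) auto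
  hence "l (T u) v = l (A (A u)) v + (-mu) * l u v"
    using u v by (simp add: herm_add1[OF herm] herm_smult1[OF herm])
  moreover have "T v = A (A v) + (-mu) \<cdot>\<^sub>v v" unfolding T_def using v by (intro eq_vecI) auto
  hence "l u (T v) = l u (A (A v)) + (-mu) * l u v"
    using u v by (simp add: herm_add2[OF herm] herm_smult2[OF herm])
  ultimately show ?thesis using 1 4 by simp
qed

lemma Tk_sa: "u \<in> carrier_vec n \<Longrightarrow> v \<in> carrier_vec n \<Longrightarrow> l ((T ^^ k) u) v = l u ((T ^^ k) v)"
proof (induction k arbitrary: v)
  case (Suc k)
  have "l ((T ^^ Suc k) u) v = l ((T ^^ k) u) (T v)" using Suc by (simp add: T_sa)
  also have "\<dots> = l u ((T ^^ k) (T v))" using Suc by simp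
  also have "\<dots> = l u ((T ^^ Suc k) v)" by (simp add: funpow_swap1)
  finally show ?case .
qed simp

lemma krylov:
  assumes x: "x \<in> carrier_vec n"
  shows "\<exists>u\<in>U. \<exists>y\<in>carrier_vec n. x = u + T y"
proof -
  define vs where "vs = map (\<lambda>k. (T ^^ k) x) [0..<Suc n]"
  have vsc: "set vs \<subseteq> carrier_vec n" unfolding vs_def using x by auto
  obtain c where c: "c \<in> carrier_vec (Suc n)" "c \<noteq> 0\<^sub>v (Suc n)" "lin_comb n vs c = 0\<^sub>v n"
    using many_vecs_dep[OF vsc] unfolding vs_def by auto
  have "\<exists>k<Suc n. c $ k \<noteq> 0"
  proof (rule ccontr)
    assume "\<not> ?thesis"
    hence "c = 0\<^sub>v (Suc n)" using c(1) by (intro eq_vecI) auto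
    thus False using c(2) by simp
  qed
  then obtain k0 where k0: "k0 < Suc n" "c $ k0 \<noteq> 0" by auto
  define j where "j = (LEAST k. c $ k \<noteq> 0)"
  have cj: "c $ j \<noteq> 0" unfolding j_def by (rule LeastI[of "\<lambda>k. c $ k \<noteq> 0", OF k0(2)])
  have jle: "j \<le> k0" unfolding j_def using k0 by (simp add: Least_le)
  hence jn: "j \<le> n" using k0 by simp
  have below: "\<And>k. k < j \<Longrightarrow> c $ k = 0" unfolding j_def using not_less_Least by blast
  define ws where "ws = map (\<lambda>k. (T ^^ k) x) [0..<n-j]"
  define d where "d = vec (n-j) (\<lambda>k. c $ (j+1+k))"
  define z where "z = lin_comb n ws d"
  have wsc: "set ws \<subseteq> carrier_vec n" unfolding ws_def using x by auto
  have Tz: "(T ^^ (j+1)) z = lin_comb n (map (\<lambda>k. (T ^^ (j+1+k)) x) [0..<n-j]) d"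
    unfolding z_def lin_on_lin_comb[OF subsp_carrier lin_Tk wsc]
    unfolding ws_def map_map
  proof -
    have "map ((T ^^ (j+1)) \<circ> (\<lambda>k. (T ^^ k) x)) [0..<n-j] = map (\<lambda>k. (T ^^ (j+1+k)) x) [0..<n-j]"
      by (simp add: funpow_add comp_def)
    thus "lin_comb n (map ((T ^^ (j + 1)) \<circ> (\<lambda>k. (T ^^ k) x)) [0..<n - j]) d =
    lin_comb n (map (\<lambda>k. (T ^^ (j+1+k)) x) [0..<n - j]) d" by (rule arg_cong[of _ _ "\<lambda>xs. lin_comb n xs d"])
  qed
  have zc0: "z \<in> carrier_vec n" unfolding z_def by simp
  have key: "c $ j \<cdot>\<^sub>v (T ^^ j) x + (T ^^ (j+1)) z = 0\<^sub>v n"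
  proof (rule eq_vecI)
    fix t assume "t < dim_vec (0\<^sub>v n :: complex vec)" hence t: "t < n" by simp
    define f where "f = (\<lambda>k. c $ k * (T ^^ k) x $ t)"
    have "0 = lin_comb n vs c $ t" using c(3) t by simp
    also have "\<dots> = (\<Sum>k<Suc n. f k)"
      using t unfolding vs_def f_def by (simp add: lin_comb_index del: upt_Suc)
    also have "\<dots> = (\<Sum>k<j+1. f k) + (\<Sum>k<n-j. f (j+1+k))"
      using sum_split_add[of f "j+1" "n-j"] jn by simp
    also have "(\<Sum>k<j+1. f k) = c $ j * (T ^^ j) x $ t"
      using below unfolding f_def by (simp add: lessThan_Suc)
    also have "(\<Sum>k<n-j. f (j+1+k)) = (T ^^ (j+1)) z $ t"
      unfolding Tz f_def using t by (simp add: lin_comb_index d_def)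
    finally show "(c $ j \<cdot>\<^sub>v (T ^^ j) x + (T ^^ (j+1)) z) $ t = 0\<^sub>v n $ t"
      using t x zc0 by simp
  qed (simp add: zc0)
  define y where "y = (- 1 / c $ j) \<cdot>\<^sub>v z"
  have zc: "z \<in> carrier_vec n" unfolding z_def by simp
  have yc: "y \<in> carrier_vec n" unfolding y_def z_def by simp
  define u where "u = x + (-1) \<cdot>\<^sub>v T y"
  have uc: "u \<in> carrier_vec n" unfolding u_def using x yc by simp
  have "(T ^^ j) u = (T ^^ j) x + (-1) \<cdot>\<^sub>v (T ^^ (j+1)) y"
    unfolding u_def using x yc lin_onD[OF lin_Tk]
    by (simp add: funpow_swap1)
  also have "(T ^^ (j+1)) y = (-1 / c $ j) \<cdot>\<^sub>v (T ^^ (j+1)) z"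
    unfolding y_def by (rule lin_onD(3)[OF lin_Tk zc])
  also have "(T ^^ j) x + (-1) \<cdot>\<^sub>v ((-1 / c $ j) \<cdot>\<^sub>v (T ^^ (j+1)) z) = 0\<^sub>v n"
  proof (rule eq_vecI)
    fix t assume "t < dim_vec (0\<^sub>v n :: complex vec)" hence t: "t < n" by simp
    have "c $ j * (T ^^ j) x $ t + (T ^^ (j+1)) z $ t = 0"
      using arg_cong[OF key, of "\<lambda>v. v $ t"] t x zc by simp
    hence "(T ^^ (j+1)) z $ t = - c $ j * (T ^^ j) x $ t" by (simp add: eq_neg_iff_add_eq_0 add.commute)
    thus "((T ^^ j) x + (-1) \<cdot>\<^sub>v ((-1 / c $ j) \<cdot>\<^sub>v (T ^^ (j+1)) z)) $ t = 0\<^sub>v n $ t"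
      using t x zc cj by simp
  qed (use x zc in simp)
  finally have Tju: "(T ^^ j) u = 0\<^sub>v n" .
  have "(T ^^ n) u = (T ^^ (n-j)) ((T ^^ j) u)"
  proof -
    have "n = (n - j) + j" using jn by simp
    hence "(T ^^ n) u = (T ^^ ((n - j) + j)) u" by simp
    thus ?thesis by (simp only: funpow_add comp_apply)
  qed
  hence "u \<in> U" unfolding U_def2 using Tju uc by simp
  moreover have "x = u + T y" unfolding u_def using x yc by (intro eq_vecI) auto
  ultimately show ?thesis using yc by auto
qed

lemma krylov_pow:
  assumes x: "x \<in> carrier_vec n"
  shows "\<exists>u\<in>U. \<exists>y\<in>carrier_vec n. x = u + (T ^^ m) y"
proof (induction m)
  case 0 show ?case using x subspD(2)[OF subsp_U] by (intro bexI[of _ "0\<^sub>v n"] bexI[of _ x]) auto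
next
  case (Suc m)
  then obtain u y where u: "u \<in> U" and y: "y \<in> carrier_vec n" and xe: "x = u + (T ^^ m) y" by auto
  obtain u' y' where u': "u' \<in> U" and y': "y' \<in> carrier_vec n" and ye: "y = u' + T y'"
    using krylov[OF y] by auto
  have "(T ^^ m) y = (T ^^ m) u' + (T ^^ Suc m) y'"
    unfolding ye using lin_onD(2)[OF lin_Tk] u' y' U_carrier
    by (simp add: funpow_swap1)
  hence "x = (u + (T ^^ m) u') + (T ^^ Suc m) y'"
    using xe u u' y' U_carrier by (simp add: funpow_swap1, intro assoc_add_vec[symmetric], auto)
  moreover have "u + (T ^^ m) u' \<in> U" using u u' Tk_U subspD(3)[OF subsp_U] by auto
  ultimately show ?case using y' by auto
qed

lemma nondeg_U:
  assumes u: "u \<in> U" and orth: "\<And>w. w \<in> U \<Longrightarrow> l u w = 0"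
  shows "u = 0\<^sub>v n"
proof -
  have uc: "u \<in> carrier_vec n" using u U_carrier by auto
  have "\<forall>w\<in>carrier_vec n. l u w = 0"
  proof
    fix w :: "complex vec" assume w: "w \<in> carrier_vec n"
    obtain u' y where u': "u' \<in> U" and y: "y \<in> carrier_vec n" and we: "w = u' + (T ^^ n) y"
      using krylov_pow[OF w, of n] by auto
    have "l u w = l u u' + l u ((T ^^ n) y)"
      unfolding we using uc u' y U_carrier by (simp add: herm_add2[OF herm])
    also have "l u ((T ^^ n) y) = l ((T ^^ n) u) y" using Tk_sa uc y by simp
    also have "\<dots> = 0" using u y unfolding U_def2 by (simp add: herm_zero1[OF herm])
    finally show "l u w = 0" using orth[OF u'] by simp
  qed
  thus ?thesis using nondeg uc unfolding nondegenerate_def by auto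
qed

end


definition conv :: "(nat \<Rightarrow> real) \<Rightarrow> (nat \<Rightarrow> real) \<Rightarrow> nat \<Rightarrow> real" where
  "conv c d k = (\<Sum>i\<le>k. c i * d (k - i))"

lemma conv_comm: "conv c d = conv d c"
proof
  fix k
  have "conv c d k = (\<Sum>i<Suc k. c i * d (k - i))" unfolding conv_def lessThan_Suc_atMost ..
  also have "\<dots> = (\<Sum>i<Suc k. c (Suc k - Suc i) * d (k - (Suc k - Suc i)))"
    by (rule sum.nat_diff_reindex[symmetric])
  also have "\<dots> = (\<Sum>i<Suc k. d i * c (k - i))"
    by (intro sum.cong) auto
  finally show "conv c d k = conv d c k" unfolding conv_def lessThan_Suc_atMost .
qed

lemma conv_double:
  fixes x :: "nat \<Rightarrow> complex"
  assumes x: "\<And>m. m \<ge> N \<Longrightarrow> x m = 0"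
  shows "(\<Sum>k<N. complex_of_real (c k) * (\<Sum>j<N. complex_of_real (d j) * x (k + j)))
       = (\<Sum>m<N. complex_of_real (conv c d m) * x m)"
proof -
  define g where "g = (\<lambda>i j. complex_of_real (c i) * complex_of_real (d j) * x (i + j))"
  have "(\<Sum>k<N. complex_of_real (c k) * (\<Sum>j<N. complex_of_real (d j) * x (k + j)))
      = (\<Sum>k<N. \<Sum>j<N. g k j)" unfolding g_def by (simp add: sum_distrib_left mult.assoc)
  also have "\<dots> = (\<Sum>(i,j)\<in>{..<N} \<times> {..<N}. g i j)" by (simp add: sum.cartesian_product)
  also have "\<dots> = (\<Sum>(i,j)\<in>{(i,j). i+j < N}. g i j)"
    by (rule sum.mono_neutral_right) (auto simp: g_def, (metis leI x)+)
  also have "\<dots> = (\<Sum>k<N. \<Sum>i\<le>k. g i (k - i))" by (rule sum.triangle_reindex)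
  also have "\<dots> = (\<Sum>m<N. complex_of_real (conv c d m) * x m)"
    unfolding conv_def g_def by (intro sum.cong refl) (simp add: sum_distrib_right)
  finally show ?thesis .
qed

lemma funpow_apply_add: "(f ^^ a) ((f ^^ b) x) = (f ^^ (a + b)) x"
  by (simp add: funpow_add)

lemma funpow_apply_comm: "(f ^^ a) ((f ^^ b) x) = (f ^^ b) ((f ^^ a) x)"
  by (simp add: funpow_apply_add add.commute)

context setting begin

definition polyT :: "(nat \<Rightarrow> real) \<Rightarrow> complex vec \<Rightarrow> complex vec" where
  "polyT c v = vsum n {..<n} (\<lambda>k. complex_of_real (c k) \<cdot>\<^sub>v (T ^^ k) v)"

lemma polyT_carrier[simp]: "polyT c v \<in> carrier_vec n"
  unfolding polyT_def by simp

lemma polyT_dim[simp]: "dim_vec (polyT c v) = n"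
  unfolding polyT_def vsum_def by simp

lemma polyT_index: "v \<in> carrier_vec n \<Longrightarrow> t < n \<Longrightarrow>
  polyT c v $ t = (\<Sum>k<n. complex_of_real (c k) * (T ^^ k) v $ t)"
  unfolding polyT_def vsum_def by simp

lemma polyT_U: "u \<in> U \<Longrightarrow> polyT c u \<in> U"
  unfolding polyT_def
  by (intro subsp_vsum[OF subsp_U]) (auto intro!: subspD(4)[OF subsp_U] Tk_U)

lemma polyT_add: "u \<in> carrier_vec n \<Longrightarrow> v \<in> carrier_vec n \<Longrightarrow> polyT c (u + v) = polyT c u + polyT c v"
proof (rule eq_vecI)
  fix t assume u: "u \<in> carrier_vec n" and v: "v \<in> carrier_vec n" and "t < dim_vec (polyT c u + polyT c v)"
  hence t: "t < n" by simp
  have e: "\<And>k. (T ^^ k) (u + v) = (T ^^ k) u + (T ^^ k) v" using lin_onD(2)[OF lin_Tk] u v by simp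
  show "polyT c (u + v) $ t = (polyT c u + polyT c v) $ t"
    using u v t by (simp add: polyT_index e distrib_left sum.distrib)
qed simp

lemma polyT_smult: "u \<in> carrier_vec n \<Longrightarrow> polyT c (z \<cdot>\<^sub>v u) = z \<cdot>\<^sub>v polyT c u"
proof (rule eq_vecI)
  fix t assume u: "u \<in> carrier_vec n" and "t < dim_vec (z \<cdot>\<^sub>v polyT c u)"
  hence t: "t < n" by simp
  have e: "\<And>k. (T ^^ k) (z \<cdot>\<^sub>v u) = z \<cdot>\<^sub>v (T ^^ k) u" using lin_onD(3)[OF lin_Tk] u by simp
  show "polyT c (z \<cdot>\<^sub>v u) $ t = (z \<cdot>\<^sub>v polyT c u) $ t"
    using u t by (simp add: polyT_index e sum_distrib_left mult.left_commute)
qed simp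

lemma lin_polyT: "lin_on n U (polyT c)"
  unfolding lin_on_def using polyT_U polyT_add polyT_smult U_carrier by auto

lemma lin_polyT_carrier: "lin_on n (carrier_vec n) (polyT c)"
  unfolding lin_on_def using polyT_add polyT_smult by auto

lemma Tk_polyT: "v \<in> carrier_vec n \<Longrightarrow> (T ^^ k) (polyT c v) = polyT c ((T ^^ k) v)"
proof -
  assume v: "v \<in> carrier_vec n"
  have "(T ^^ k) (polyT c v) = vsum n {..<n} (\<lambda>j. (T ^^ k) (complex_of_real (c j) \<cdot>\<^sub>v (T ^^ j) v))"
    unfolding polyT_def
    by (rule additive_vsum[OF subsp_carrier]) (use v lin_onD[OF lin_Tk] in auto)
  also have "\<dots> = vsum n {..<n} (\<lambda>j. complex_of_real (c j) \<cdot>\<^sub>v (T ^^ j) ((T ^^ k) v))"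
    using v lin_onD(3)[OF lin_Tk]
    by (intro vsum_cong) (simp add: funpow_apply_comm)
  finally show ?thesis unfolding polyT_def .
qed

lemma T_polyT: "v \<in> carrier_vec n \<Longrightarrow> T (polyT c v) = polyT c (T v)"
  using Tk_polyT[of v 1 c] by simp

lemma polyT_comp:
  assumes u: "u \<in> U"
  shows "polyT c (polyT d u) = polyT (conv c d) u"
proof (rule eq_vecI)
  have uc: "u \<in> carrier_vec n" using u U_carrier by simp
  fix t assume "t < dim_vec (polyT (conv c d) u)" hence t: "t < n" by simp
  have x: "\<And>m. m \<ge> n \<Longrightarrow> (T ^^ m) u $ t = 0"
  proof -
    fix m assume "m \<ge> n"
    hence "(T ^^ m) u = (T ^^ (m - n)) ((T ^^ n) u)" by (simp add: funpow_apply_add)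
    also have "\<dots> = 0\<^sub>v n" using u unfolding U_def2 by simp
    finally show "(T ^^ m) u $ t = 0" using t by simp
  qed
  have inner: "\<And>k. (T ^^ k) (polyT d u) $ t = (\<Sum>j<n. complex_of_real (d j) * (T ^^ (k + j)) u $ t)"
    using uc t by (simp add: Tk_polyT polyT_index funpow_apply_add add.commute)
  have "polyT c (polyT d u) $ t = (\<Sum>k<n. complex_of_real (c k) * (\<Sum>j<n. complex_of_real (d j) * (T ^^ (k + j)) u $ t))"
    using t by (simp add: polyT_index inner)
  also have "\<dots> = (\<Sum>m<n. complex_of_real (conv c d m) * (T ^^ m) u $ t)"
    by (rule conv_double) (rule x)
  also have "\<dots> = polyT (conv c d) u $ t" using uc t by (simp add: polyT_index)
  finally show "polyT c (polyT d u) $ t = polyT (conv c d) u $ t" .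
qed simp

lemma polyT_commute: "u \<in> U \<Longrightarrow> polyT c (polyT d u) = polyT d (polyT c u)"
  by (simp add: polyT_comp conv_comm)

lemma polyT_delta0: "v \<in> carrier_vec n \<Longrightarrow> polyT (\<lambda>k. if k = 0 then 1 else 0) v = v"
proof (rule eq_vecI)
  fix t assume v: "v \<in> carrier_vec n" and "t < dim_vec v" hence t: "t < n" by simp
  have "polyT (\<lambda>k. if k = 0 then 1 else 0) v $ t = (\<Sum>k<n. if k = 0 then v $ t else 0)"
    unfolding polyT_index[OF v t] by (intro sum.cong) auto
  also have "\<dots> = v $ t" using t by simp
  finally show "polyT (\<lambda>k. if k = 0 then 1 else 0) v $ t = v $ t" .
qed simp

lemma polyT_two:
  assumes u: "u \<in> U"
  shows "polyT (\<lambda>k. if k = 0 then a else if k = 1 then b else 0) u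
    = complex_of_real a \<cdot>\<^sub>v u + complex_of_real b \<cdot>\<^sub>v T u"
proof (rule eq_vecI)
  have uc: "u \<in> carrier_vec n" using u U_carrier by simp
  fix t assume "t < dim_vec (complex_of_real a \<cdot>\<^sub>v u + complex_of_real b \<cdot>\<^sub>v T u)"
  hence t: "t < n" using uc by simp
  have "polyT (\<lambda>k. if k = 0 then a else if k = 1 then b else 0) u $ t
     = (\<Sum>k<n. (if k = 0 then complex_of_real a * u $ t else 0) + (if k = 1 then complex_of_real b * T u $ t else 0))"
    using uc t by (simp add: polyT_index, intro sum.cong, auto)
  also have "\<dots> = complex_of_real a * u $ t + (if 1 < n then complex_of_real b * T u $ t else 0)"
    using t by (simp add: sum.distrib)
  also have "\<dots> = complex_of_real a * u $ t + complex_of_real b * T u $ t"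
  proof (cases "1 < n")
    case False
    hence "n = 1" using t by simp
    hence "T u = 0\<^sub>v n" using u unfolding U_def2 by simp
    thus ?thesis using False t by simp
  qed simp
  finally show "polyT (\<lambda>k. if k = 0 then a else if k = 1 then b else 0) u $ t
     = (complex_of_real a \<cdot>\<^sub>v u + complex_of_real b \<cdot>\<^sub>v T u) $ t" using uc t by simp
qed (use U_carrier[OF assms] in simp)

lemma polyT_lin:
  "v \<in> carrier_vec n \<Longrightarrow> polyT (\<lambda>k. a * c k + b * d k) v
     = complex_of_real a \<cdot>\<^sub>v polyT c v + complex_of_real b \<cdot>\<^sub>v polyT d v"
proof (rule eq_vecI)
  fix t assume v: "v \<in> carrier_vec n" and "t < dim_vec (complex_of_real a \<cdot>\<^sub>v polyT c v + complex_of_real b \<cdot>\<^sub>v polyT d v)"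
  hence t: "t < n" by simp
  show "polyT (\<lambda>k. a * c k + b * d k) v $ t = (complex_of_real a \<cdot>\<^sub>v polyT c v + complex_of_real b \<cdot>\<^sub>v polyT d v) $ t"
    using v t by (simp add: polyT_index sum.distrib sum_distrib_left algebra_simps)
qed simp

lemma A_polyT: "v \<in> carrier_vec n \<Longrightarrow> A (polyT c v) = polyT c (A v)"
proof -
  assume v: "v \<in> carrier_vec n"
  have "A (polyT c v) = vsum n {..<n} (\<lambda>j. A (complex_of_real (c j) \<cdot>\<^sub>v (T ^^ j) v))"
    unfolding polyT_def
    by (rule additive_vsum[OF subsp_carrier]) (use v A_add in auto)
  also have "\<dots> = vsum n {..<n} (\<lambda>j. complex_of_real (c j) \<cdot>\<^sub>v (T ^^ j) (A v))"
    using v by (intro vsum_cong) (simp add: A_smult Tk_A)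
  finally show ?thesis unfolding polyT_def .
qed

lemma l_polyT: "u \<in> carrier_vec n \<Longrightarrow> v \<in> carrier_vec n \<Longrightarrow> l (polyT c u) v = l u (polyT c v)"
proof -
  assume u: "u \<in> carrier_vec n" and v: "v \<in> carrier_vec n"
  have "l (polyT c u) v = (\<Sum>k<n. l (complex_of_real (c k) \<cdot>\<^sub>v (T ^^ k) u) v)"
    unfolding polyT_def
    by (rule sum_additive_vsum[OF subsp_carrier]) (use u v in \<open>auto simp: herm_add1[OF herm] herm_zero1[OF herm]\<close>)
  also have "\<dots> = (\<Sum>k<n. l u (complex_of_real (c k) \<cdot>\<^sub>v (T ^^ k) v))"
    using u v by (intro sum.cong) (auto simp: herm_smult1[OF herm] herm_smult2[OF herm] Tk_sa)
  also have "\<dots> = l u (polyT c v)"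
    unfolding polyT_def
    by (rule sum_additive_vsum[OF subsp_carrier, symmetric, where F="\<lambda>x. l u x"])
      (use u v in \<open>auto simp: herm_add2[OF herm] herm_zero2[OF herm]\<close>)
  finally show ?thesis .
qed

end



context setting begin

definition L :: real where "L = \<bar>lam\<bar>"
definition m :: real where "m = lam\<^sup>2"

lemma L_pos: "L > 0" unfolding L_def using pos by auto
lemma m_pos: "m > 0" unfolding m_def using pos by auto
lemma LL: "L * L = m" unfolding L_def m_def by (simp add: power2_eq_square abs_mult_self_eq)
lemma mu_m: "mu = complex_of_real m" unfolding mu_def m_def by simp

definition rho :: "nat \<Rightarrow> real" where "rho k = ((1/2::real) gchoose k) / m ^ k"
definition kap :: "nat \<Rightarrow> real" where "kap k = ((-1/2::real) gchoose k) / m ^ k"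
definition d0 :: "nat \<Rightarrow> real" where "d0 k = (if k = 0 then 1 else 0)"
definition nu :: "nat \<Rightarrow> real" where "nu k = L * (rho k - d0 k)"
definition wco :: "nat \<Rightarrow> real" where "wco k = nu (Suc k)"
definition vco :: "nat \<Rightarrow> real" where "vco k = L * (rho k + d0 k)"

lemma conv_gch: "conv (\<lambda>k. (a gchoose k) / m ^ k) (\<lambda>k. (b gchoose k) / m ^ k) k = ((a + b) gchoose k) / m ^ k"
proof -
  have "conv (\<lambda>k. (a gchoose k) / m ^ k) (\<lambda>k. (b gchoose k) / m ^ k) k
     = (\<Sum>i\<le>k. (a gchoose i) * (b gchoose (k - i)) / m ^ k)"
    unfolding conv_def
  proof (intro sum.cong refl)
    fix i assume "i \<in> {..k}" hence "m ^ i * m ^ (k - i) = m ^ k" by (simp add: power_add[symmetric])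
    thus "(a gchoose i) / m ^ i * ((b gchoose (k - i)) / m ^ (k - i)) = (a gchoose i) * (b gchoose (k - i)) / m ^ k"
      by (metis divide_divide_eq_left times_divide_times_eq)
  qed
  also have "\<dots> = (\<Sum>i\<le>k. (a gchoose i) * (b gchoose (k - i))) / m ^ k"
    by (simp add: sum_divide_distrib)
  also have "\<dots> = ((a + b) gchoose k) / m ^ k"
    using gbinomial_Vandermonde[of a b k] by (simp add: atMost_atLeast0)
  finally show ?thesis .
qed

lemma one_gchoose: "((1::real) gchoose k) = (if k = 0 then 1 else if k = 1 then 1 else 0)"
proof -
  have "((1::real) gchoose k) = real (1 choose k)" by (simp add: binomial_gbinomial)
  thus ?thesis by (cases k) (auto simp: binomial_eq_0)
qed

lemma conv_rho_rho: "conv rho rho = (\<lambda>k. if k = 0 then 1 else if k = 1 then 1 / m else 0)"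
proof
  fix k
  have "conv rho rho k = ((1/2 + 1/2::real) gchoose k) / m ^ k"
    unfolding rho_def[abs_def] by (rule conv_gch)
  thus "conv rho rho k = (if k = 0 then 1 else if k = 1 then 1 / m else 0)"
    by (simp add: one_gchoose)
qed

lemma conv_rho_kap: "conv rho kap = d0"
proof
  fix k
  have "conv rho kap k = ((1/2 + -1/2::real) gchoose k) / m ^ k"
    unfolding rho_def[abs_def] kap_def[abs_def] by (rule conv_gch)
  thus "conv rho kap k = d0 k" by (simp add: gbinomial_0_left d0_def)
qed

lemma rho0: "rho 0 = 1" unfolding rho_def by simp
lemma nu0: "nu 0 = 0" unfolding nu_def rho_def d0_def by simp

definition R where "R = polyT rho"
definition Ri where "Ri = polyT kap"
definition Nt where "Nt = polyT nu"
definition W where "W = polyT wco"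
definition V where "V = polyT vco"

lemma R_U: "u \<in> U \<Longrightarrow> R u \<in> U" unfolding R_def by (rule polyT_U)
lemma Ri_U: "u \<in> U \<Longrightarrow> Ri u \<in> U" unfolding Ri_def by (rule polyT_U)
lemma Nt_U: "u \<in> U \<Longrightarrow> Nt u \<in> U" unfolding Nt_def by (rule polyT_U)
lemma W_U: "u \<in> U \<Longrightarrow> W u \<in> U" unfolding W_def by (rule polyT_U)
lemma V_U: "u \<in> U \<Longrightarrow> V u \<in> U" unfolding V_def by (rule polyT_U)

lemma d0_lam: "d0 = (\<lambda>k. if k = 0 then 1 else 0)" unfolding d0_def by auto

lemma R_Ri: "u \<in> U \<Longrightarrow> R (Ri u) = u"
  unfolding R_def Ri_def using U_carrier
  by (simp add: polyT_comp conv_rho_kap d0_lam polyT_delta0)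

lemma Ri_R: "u \<in> U \<Longrightarrow> Ri (R u) = u"
  unfolding R_def Ri_def using U_carrier
  by (simp add: polyT_comp conv_comm[of kap] conv_rho_kap d0_lam polyT_delta0)

lemma R_R: "u \<in> U \<Longrightarrow> R (R u) = u + complex_of_real (1/m) \<cdot>\<^sub>v T u"
proof -
  assume u: "u \<in> U"
  have "R (R u) = polyT (\<lambda>k. if k = 0 then 1 else if k = 1 then 1 / m else 0) u"
    unfolding R_def polyT_comp[OF u] conv_rho_rho ..
  also have "\<dots> = complex_of_real 1 \<cdot>\<^sub>v u + complex_of_real (1/m) \<cdot>\<^sub>v T u" by (rule polyT_two[OF u])
  finally show ?thesis by simp
qed

lemma AA_RR: "u \<in> U \<Longrightarrow> A (A u) = mu \<cdot>\<^sub>v R (R u)"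
proof -
  assume u: "u \<in> U"
  have uc: "u \<in> carrier_vec n" using U_carrier u by simp
  show ?thesis unfolding R_R[OF u]
  proof (rule eq_vecI)
    fix t assume "t < dim_vec (mu \<cdot>\<^sub>v (u + complex_of_real (1 / m) \<cdot>\<^sub>v T u))"
    hence t: "t < n" using uc by simp
    have "T u $ t = A (A u) $ t - mu * u $ t" unfolding T_def using uc t by simp
    thus "A (A u) $ t = (mu \<cdot>\<^sub>v (u + complex_of_real (1 / m) \<cdot>\<^sub>v T u)) $ t"
      using uc t m_pos by (simp add: mu_m field_simps)
  qed (use uc in simp)
qed

lemma R_Nt: "v \<in> carrier_vec n \<Longrightarrow> R v = v + complex_of_real (1/L) \<cdot>\<^sub>v Nt v"
proof -
  assume v: "v \<in> carrier_vec n"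
  have "rho = (\<lambda>k. 1 * d0 k + (1/L) * nu k)"
    using L_pos by (auto simp: nu_def d0_def)
  hence "R v = complex_of_real 1 \<cdot>\<^sub>v polyT d0 v + complex_of_real (1/L) \<cdot>\<^sub>v polyT nu v"
    unfolding R_def using polyT_lin[OF v, of 1 d0 "1/L" nu] by simp
  thus ?thesis unfolding Nt_def using polyT_delta0[OF v] by (simp add: d0_def[abs_def])
qed

lemma T_eq_polyT: "u \<in> U \<Longrightarrow> T u = polyT (\<lambda>k. if k = 0 then 0 else if k = 1 then 1 else 0) u"
proof -
  assume u: "u \<in> U"
  have "0 \<cdot>\<^sub>v u = 0\<^sub>v n" using smult0_vec U_carrier[OF u] by simp
  thus ?thesis using polyT_two[OF u, of 0 1] U_carrier[OF u] by simp
qed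

lemma Nt_TW: "u \<in> U \<Longrightarrow> Nt u = T (W u)"
proof -
  assume u: "u \<in> U"
  have c: "conv (\<lambda>k. if k = 0 then 0 else if k = 1 then 1 else 0) wco = nu"
  proof
    fix k
    have "conv (\<lambda>k. if k = 0 then 0 else if k = 1 then 1 else 0) wco k
        = (\<Sum>i\<le>k. if i = 1 then wco (k - 1) else 0)"
      unfolding conv_def by (intro sum.cong) auto
    also have "\<dots> = (if 1 \<le> k then wco (k - 1) else 0)" by simp
    also have "\<dots> = nu k" using nu0 unfolding wco_def by (cases k) auto
    finally show "conv (\<lambda>k. if k = 0 then 0 else if k = 1 then 1 else 0) wco k = nu k" .
  qed
  have "T (W u) = polyT (\<lambda>k. if k = 0 then 0 else if k = 1 then 1 else 0) (W u)"
    using T_eq_polyT W_U u by simp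
  also have "\<dots> = Nt u" unfolding W_def Nt_def polyT_comp[OF u] c ..
  finally show ?thesis ..
qed

lemma T_NtV: "u \<in> U \<Longrightarrow> T u = Nt (V u)"
proof -
  assume u: "u \<in> U"
  have c: "conv nu vco = (\<lambda>k. if k = 0 then 0 else if k = 1 then 1 else 0)"
  proof
    fix k
    have "conv nu vco k = (\<Sum>i\<le>k. L * L * (rho i * rho (k - i) + rho i * d0 (k - i) - d0 i * rho (k - i) - d0 i * d0 (k - i)))"
      unfolding conv_def nu_def vco_def by (intro sum.cong) (auto simp: algebra_simps)
    also have "\<dots> = m * (conv rho rho k + (\<Sum>i\<le>k. rho i * d0 (k - i)) - (\<Sum>i\<le>k. d0 i * rho (k - i)) - (\<Sum>i\<le>k. d0 i * d0 (k - i)))"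
      unfolding LL conv_def by (simp add: sum.distrib sum_subtractf flip: sum_distrib_left)
    also have "(\<Sum>i\<le>k. rho i * d0 (k - i)) = rho k"
    proof -
      have "(\<Sum>i\<le>k. rho i * d0 (k - i)) = (\<Sum>i\<le>k. if i = k then rho k else 0)"
        unfolding d0_def by (intro sum.cong) auto
      thus ?thesis by simp
    qed
    also have "(\<Sum>i\<le>k. d0 i * rho (k - i)) = rho k"
    proof -
      have "(\<Sum>i\<le>k. d0 i * rho (k - i)) = (\<Sum>i\<le>k. if i = 0 then rho k else 0)"
        unfolding d0_def by (intro sum.cong) auto
      thus ?thesis by simp
    qed
    also have "(\<Sum>i\<le>k. d0 i * d0 (k - i)) = d0 k"
    proof -
      have "(\<Sum>i\<le>k. d0 i * d0 (k - i)) = (\<Sum>i\<le>k. if i = 0 then d0 k else 0)"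
        unfolding d0_def by (intro sum.cong) auto
      thus ?thesis by simp
    qed
    finally show "conv nu vco k = (if k = 0 then 0 else if k = 1 then 1 else 0)"
      using m_pos by (simp add: conv_rho_rho d0_def)
  qed
  have "Nt (V u) = polyT (conv nu vco) u" unfolding Nt_def V_def polyT_comp[OF u] ..
  also have "\<dots> = T u" unfolding c using T_eq_polyT[OF u] ..
  finally show ?thesis ..
qed

lemma polyT_pow_commute: "x \<in> U \<Longrightarrow> polyT c ((polyT d ^^ k) x) = (polyT d ^^ k) (polyT c x)"
proof (induction k)
  case (Suc k)
  have y: "(polyT d ^^ k) x \<in> U"
    using Suc.prems by (induction k) (auto intro: polyT_U)
  have "polyT c ((polyT d ^^ Suc k) x) = polyT c (polyT d ((polyT d ^^ k) x))" by simp
  also have "\<dots> = polyT d (polyT c ((polyT d ^^ k) x))" using polyT_commute[OF y] by simp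
  also have "\<dots> = polyT d ((polyT d ^^ k) (polyT c x))" using Suc by simp
  finally show ?case by simp
qed simp

lemma polyT_pow_U: "x \<in> U \<Longrightarrow> (polyT d ^^ k) x \<in> U"
  by (induction k) (auto intro: polyT_U)

lemma Ntk_TW: "u \<in> U \<Longrightarrow> (Nt ^^ k) u = (T ^^ k) ((W ^^ k) u)"
proof (induction k)
  case (Suc k)
  have wk: "(W ^^ k) u \<in> U" unfolding W_def using polyT_pow_U Suc.prems by simp
  have "(Nt ^^ Suc k) u = Nt ((T ^^ k) ((W ^^ k) u))" using Suc by simp
  also have "\<dots> = T (W ((T ^^ k) ((W ^^ k) u)))" using Nt_TW Tk_U wk by simp
  also have "W ((T ^^ k) ((W ^^ k) u)) = (T ^^ k) (W ((W ^^ k) u))"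
    unfolding W_def using Tk_polyT U_carrier[OF wk[unfolded W_def]] by simp
  finally show ?case by (simp add: funpow_swap1)
qed simp

lemma Tk_NtV: "u \<in> U \<Longrightarrow> (T ^^ k) u = (Nt ^^ k) ((V ^^ k) u)"
proof (induction k)
  case (Suc k)
  have vk: "(V ^^ k) u \<in> U" unfolding V_def using polyT_pow_U Suc.prems by simp
  have nk: "(Nt ^^ k) ((V ^^ k) u) \<in> U" unfolding Nt_def using polyT_pow_U vk by simp
  have "(T ^^ Suc k) u = T ((Nt ^^ k) ((V ^^ k) u))" using Suc by simp
  also have "\<dots> = Nt (V ((Nt ^^ k) ((V ^^ k) u)))" using T_NtV nk by simp
  also have "V ((Nt ^^ k) ((V ^^ k) u)) = (Nt ^^ k) (V ((V ^^ k) u))"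
    unfolding V_def Nt_def using polyT_pow_commute vk[unfolded V_def] by simp
  finally show ?case by (simp add: funpow_swap1)
qed simp

lemma Nt_nilp: "u \<in> U \<Longrightarrow> (Nt ^^ n) u = 0\<^sub>v n"
proof -
  assume u: "u \<in> U"
  have "(W ^^ n) u \<in> U" unfolding W_def using polyT_pow_U u by simp
  thus ?thesis using Ntk_TW[OF u, of n] unfolding U_def2 by simp
qed

definition K where "K u = complex_of_real (1/L) \<cdot>\<^sub>v A (Ri u)"

lemma K_U: "u \<in> U \<Longrightarrow> K u \<in> U"
  unfolding K_def using A_U Ri_U subspD(4)[OF subsp_U] by simp

lemma Ri_carrier: "Ri u \<in> carrier_vec n" unfolding Ri_def by simp

lemma alin_K: "alin_on n U K"
  unfolding alin_on_def
proof (intro conjI ballI allI)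
  fix u v assume u: "u \<in> U" and v: "v \<in> U"
  have "Ri (u + v) = Ri u + Ri v" unfolding Ri_def using lin_onD(2)[OF lin_polyT u v] .
  hence e: "A (Ri (u + v)) = A (Ri u) + A (Ri v)" using Ri_carrier A_add by simp
  show "K (u + v) = K u + K v" unfolding K_def e
    by (rule smult_add_distrib_vec[of _ n]) (auto simp: Ri_carrier)
next
  fix z u assume u: "u \<in> U"
  have "Ri (z \<cdot>\<^sub>v u) = z \<cdot>\<^sub>v Ri u" unfolding Ri_def using lin_onD(3)[OF lin_polyT u] .
  thus "K (z \<cdot>\<^sub>v u) = cnj z \<cdot>\<^sub>v K u" unfolding K_def using Ri_carrier
    by (simp add: A_smult smult_smult_assoc mult.commute)
qed (rule K_U)

lemma A_real_smult: "v \<in> carrier_vec n \<Longrightarrow> A (complex_of_real r \<cdot>\<^sub>v v) = complex_of_real r \<cdot>\<^sub>v A v"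
  by (simp add: A_smult)

lemma K_K: "u \<in> U \<Longrightarrow> K (K u) = u"
proof -
  assume u: "u \<in> U"
  have uc: "u \<in> carrier_vec n" using u U_carrier by simp
  have riu: "Ri u \<in> U" using Ri_U u by simp
  have ririu: "Ri (Ri u) \<in> U" using Ri_U riu by simp
  have "K (K u) = complex_of_real (1/L) \<cdot>\<^sub>v A (Ri (complex_of_real (1/L) \<cdot>\<^sub>v A (Ri u)))"
    unfolding K_def ..
  also have "Ri (complex_of_real (1/L) \<cdot>\<^sub>v A (Ri u)) = complex_of_real (1/L) \<cdot>\<^sub>v Ri (A (Ri u))"
    unfolding Ri_def by (rule polyT_smult) (simp add: Ri_carrier)
  also have "Ri (A (Ri u)) = A (Ri (Ri u))" unfolding Ri_def using A_polyT Ri_carrier[unfolded Ri_def] by simp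
  also have "A (complex_of_real (1/L) \<cdot>\<^sub>v A (Ri (Ri u))) = complex_of_real (1/L) \<cdot>\<^sub>v A (A (Ri (Ri u)))"
    using Ri_carrier by (simp add: A_smult)
  also have "A (A (Ri (Ri u))) = mu \<cdot>\<^sub>v R (R (Ri (Ri u)))" using AA_RR ririu by simp
  also have "R (R (Ri (Ri u))) = u" using R_Ri riu u by simp
  finally have "K (K u) = complex_of_real (1/L) \<cdot>\<^sub>v (complex_of_real (1/L) \<cdot>\<^sub>v (mu \<cdot>\<^sub>v u))" .
  also have "\<dots> = u"
  proof -
    have e: "mu / (complex_of_real L * complex_of_real L) = 1"
      using L_pos LL m_pos unfolding mu_m by (simp flip: of_real_mult)
    show ?thesis using uc by (simp add: smult_smult_assoc e)
  qed
  finally show ?thesis .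
qed

lemma A_KR: "u \<in> U \<Longrightarrow> A u = complex_of_real L \<cdot>\<^sub>v K (R u)"
proof -
  assume u: "u \<in> U"
  have uc: "u \<in> carrier_vec n" using u U_carrier by simp
  have "K (R u) = complex_of_real (1/L) \<cdot>\<^sub>v A u" unfolding K_def using Ri_R u by simp
  thus ?thesis using uc L_pos by (simp add: smult_smult_assoc)
qed

lemma K_sa: "u \<in> U \<Longrightarrow> v \<in> U \<Longrightarrow> l (K u) v = l (K v) u"
proof -
  assume u: "u \<in> U" and v: "v \<in> U"
  have uc: "u \<in> carrier_vec n" and vc: "v \<in> carrier_vec n" using u v U_carrier by auto
  have "l (K u) v = complex_of_real (1/L) * l (A (Ri u)) v"
    unfolding K_def using vc Ri_carrier by (simp add: herm_smult1[OF herm])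
  also have "l (A (Ri u)) v = l (A v) (Ri u)" using sa' vc Ri_carrier by simp
  also have "\<dots> = cnj (l (Ri u) (A v))" using l_sym[of "A v" "Ri u"] vc Ri_carrier by simp
  also have "l (Ri u) (A v) = l u (Ri (A v))" unfolding Ri_def using l_polyT uc vc by simp
  also have "Ri (A v) = A (Ri v)" unfolding Ri_def using A_polyT vc by simp
  also have "cnj (l u (A (Ri v))) = l (A (Ri v)) u" using l_sym[of "A (Ri v)" u] uc Ri_carrier by simp
  also have "complex_of_real (1/L) * l (A (Ri v)) u = l (K v) u"
    unfolding K_def using uc Ri_carrier by (simp add: herm_smult1[OF herm])
  finally show ?thesis .
qed

lemma K_Nt: "u \<in> U \<Longrightarrow> K (Nt u) = Nt (K u)"
proof -
  assume u: "u \<in> U"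
  have "Ri (Nt u) = Nt (Ri u)" unfolding Ri_def Nt_def using polyT_commute u by simp
  hence "K (Nt u) = complex_of_real (1/L) \<cdot>\<^sub>v Nt (A (Ri u))"
    unfolding K_def Nt_def using A_polyT Ri_carrier by simp
  also have "\<dots> = Nt (K u)" unfolding K_def Nt_def using polyT_smult A_carrier Ri_carrier by simp
  finally show ?thesis .
qed

lemma lin_Nt: "lin_on n U Nt" unfolding Nt_def by (rule lin_polyT)

lemma Nt_sa: "u \<in> U \<Longrightarrow> v \<in> U \<Longrightarrow> l (Nt u) v = l u (Nt v)"
  unfolding Nt_def using l_polyT U_carrier by simp

end


lemma lin_on_comp': "lin_on n S F \<Longrightarrow> lin_on n S G \<Longrightarrow> lin_on n S (F \<circ> G)"
  unfolding lin_on_def by auto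

lemma lin_on_pow': "lin_on n S F \<Longrightarrow> lin_on n S (F ^^ k)"
proof (induction k)
  case 0 show ?case unfolding lin_on_def by auto
next
  case (Suc k) thus ?case using lin_on_comp'[of n S F "F ^^ k"] by (simp add: comp_def)
qed

locale core =
  fixes n :: nat and l :: "complex vec \<Rightarrow> complex vec \<Rightarrow> complex"
    and U :: "complex vec set" and K N :: "complex vec \<Rightarrow> complex vec"
  assumes herm: "hermitian_form n l"
    and sU: "subsp n U"
    and alinK: "alin_on n U K"
    and KK: "\<And>u. u \<in> U \<Longrightarrow> K (K u) = u"
    and Ksa: "\<And>u v. u \<in> U \<Longrightarrow> v \<in> U \<Longrightarrow> l (K u) v = l (K v) u"
    and linN: "lin_on n U N"
    and NK: "\<And>u. u \<in> U \<Longrightarrow> N (K u) = K (N u)"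
    and Nsa: "\<And>u v. u \<in> U \<Longrightarrow> v \<in> U \<Longrightarrow> l (N u) v = l u (N v)"
    and nilp: "\<And>u. u \<in> U \<Longrightarrow> (N ^^ n) u = 0\<^sub>v n"
begin

lemma Uc: "u \<in> U \<Longrightarrow> u \<in> carrier_vec n" using subspD(1)[OF sU] by auto

lemma linNk: "lin_on n U (N ^^ k)" by (rule lin_on_pow'[OF linN])

lemma Nk_U: "u \<in> U \<Longrightarrow> (N ^^ k) u \<in> U" using lin_onD(1)[OF linNk] .

lemma Nk_add: "u \<in> U \<Longrightarrow> v \<in> U \<Longrightarrow> (N ^^ k) (u + v) = (N ^^ k) u + (N ^^ k) v"
  using lin_onD(2)[OF linNk] .

lemma Nk_smult: "u \<in> U \<Longrightarrow> (N ^^ k) (z \<cdot>\<^sub>v u) = z \<cdot>\<^sub>v (N ^^ k) u"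
  using lin_onD(3)[OF linNk] .

lemma Nk_zero: "(N ^^ k) (0\<^sub>v n) = 0\<^sub>v n" using lin_on_zero[OF sU linNk] .

lemma Nk_sa: "u \<in> U \<Longrightarrow> v \<in> U \<Longrightarrow> l ((N ^^ k) u) v = l u ((N ^^ k) v)"
proof (induction k arbitrary: v)
  case (Suc k)
  have "l ((N ^^ Suc k) u) v = l ((N ^^ k) u) (N v)" using Suc Nsa Nk_U by simp
  also have "\<dots> = l u ((N ^^ k) (N v))" using Suc lin_onD(1)[OF linN] by simp
  finally show ?case by (simp add: funpow_swap1)
qed simp

lemma Nk_K: "u \<in> U \<Longrightarrow> (N ^^ k) (K u) = K ((N ^^ k) u)"
proof (induction k)
  case (Suc k) thus ?case using NK Nk_U by simp
qed simp

lemma K_U: "u \<in> U \<Longrightarrow> K u \<in> U" using alin_onD(1)[OF alinK] .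
lemma K_add: "u \<in> U \<Longrightarrow> v \<in> U \<Longrightarrow> K (u + v) = K u + K v" using alin_onD(2)[OF alinK] .
lemma K_smult: "u \<in> U \<Longrightarrow> K (z \<cdot>\<^sub>v u) = cnj z \<cdot>\<^sub>v K u" using alin_onD(3)[OF alinK] .

definition rl :: "complex vec \<Rightarrow> bool" where "rl v \<longleftrightarrow> v \<in> U \<and> K v = v"

lemma rl_Nk: "rl v \<Longrightarrow> rl ((N ^^ k) v)"
  unfolding rl_def using Nk_U Nk_K by metis

lemma rl_add: "rl a \<Longrightarrow> rl b \<Longrightarrow> rl (a + b)"
  unfolding rl_def using K_add subspD(3)[OF sU] by simp

lemma rl_smult: "rl a \<Longrightarrow> rl (complex_of_real r \<cdot>\<^sub>v a)"
  unfolding rl_def using K_smult subspD(4)[OF sU] by simp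

lemma rl_sym: "rl a \<Longrightarrow> rl b \<Longrightarrow> l a b = l b a"
  unfolding rl_def using Ksa by metis

lemma rl_real: "rl a \<Longrightarrow> rl b \<Longrightarrow> cnj (l a b) = l a b"
proof -
  assume a: "rl a" and b: "rl b"
  have "l a b = cnj (l b a)" using herm_sym[OF herm] a b Uc unfolding rl_def by blast
  thus ?thesis using rl_sym[OF a b] by simp
qed

lemma rl_decomp:
  assumes y: "y \<in> U"
  shows "\<exists>a b. rl a \<and> rl b \<and> y = a + \<i> \<cdot>\<^sub>v b"
proof -
  have yc: "y \<in> carrier_vec n" using Uc y by simp
  have Ky: "K y \<in> U" using K_U y by simp
  have Kyc: "K y \<in> carrier_vec n" using Uc Ky by simp
  define a where "a = complex_of_real (1/2) \<cdot>\<^sub>v (y + K y)"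
  define b where "b = (- \<i> / 2) \<cdot>\<^sub>v (y + (-1) \<cdot>\<^sub>v K y)"
  have s1: "y + K y \<in> U" using y Ky subspD(3)[OF sU] by simp
  have s2: "(-1) \<cdot>\<^sub>v K y \<in> U" using Ky subspD(4)[OF sU] by simp
  have s3: "y + (-1) \<cdot>\<^sub>v K y \<in> U" using y s2 subspD(3)[OF sU] by simp
  have "K (y + K y) = y + K y" using K_add[OF y Ky] KK[OF y] Kyc yc by (simp add: comm_add_vec)
  hence ra: "rl a" unfolding rl_def a_def using K_smult s1 subspD(4)[OF sU] by simp
  have "K (y + (-1) \<cdot>\<^sub>v K y) = K y + (-1) \<cdot>\<^sub>v y"
    using K_add[OF y s2] K_smult[OF Ky] KK[OF y] by simp
  hence "K b = (\<i> / 2) \<cdot>\<^sub>v (K y + (-1) \<cdot>\<^sub>v y)" unfolding b_def using K_smult[OF s3] by simp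
  also have "\<dots> = b" unfolding b_def using yc Kyc by (intro eq_vecI) (auto simp: field_simps)
  finally have rb: "rl b" unfolding rl_def b_def using s3 subspD(4)[OF sU] by simp
  have "y = a + \<i> \<cdot>\<^sub>v b" unfolding a_def b_def using yc Kyc by (intro eq_vecI) (auto simp: field_simps)
  thus ?thesis using ra rb by blast
qed

definition chain :: "nat \<Rightarrow> complex vec \<Rightarrow> complex vec list" where
  "chain s v = map (\<lambda>i. (N ^^ (s - 1 - i)) v) [0..<s]"

lemma length_chain[simp]: "length (chain s v) = s" unfolding chain_def by simp

lemma chain_nth: "i < s \<Longrightarrow> chain s v ! i = (N ^^ (s - 1 - i)) v" unfolding chain_def by simp

lemma in_set_chain: "x \<in> set (chain s v) \<longleftrightarrow> (\<exists>i<s. x = (N ^^ i) v)"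
proof
  assume "x \<in> set (chain s v)"
  then obtain j where j: "j < s" "x = (N ^^ (s - 1 - j)) v" unfolding chain_def by auto
  thus "\<exists>i<s. x = (N ^^ i) v" by (intro exI[of _ "s - 1 - j"]) auto
next
  assume "\<exists>i<s. x = (N ^^ i) v"
  then obtain i where i: "i < s" "x = (N ^^ i) v" by auto
  hence "chain s v ! (s - 1 - i) = x" by (simp add: chain_nth)
  moreover have "s - 1 - i < length (chain s v)" using i by simp
  ultimately show "x \<in> set (chain s v)" by (metis nth_mem)
qed

end


context core begin

definition goodY :: "complex vec set \<Rightarrow> bool" where
  "goodY Y \<longleftrightarrow> subsp n Y \<and> Y \<subseteq> U \<and> (\<forall>y\<in>Y. K y \<in> Y) \<and> (\<forall>y\<in>Y. N y \<in> Y)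
     \<and> (\<forall>u\<in>Y. (\<forall>w\<in>Y. l u w = 0) \<longrightarrow> u = 0\<^sub>v n)"

lemma goodY_Nk: "goodY Y \<Longrightarrow> y \<in> Y \<Longrightarrow> (N ^^ k) y \<in> Y"
  unfolding goodY_def by (induction k) auto

lemma goodY_U: "goodY Y \<Longrightarrow> y \<in> Y \<Longrightarrow> y \<in> U"
  unfolding goodY_def by auto

lemma goodY_c: "goodY Y \<Longrightarrow> y \<in> Y \<Longrightarrow> y \<in> carrier_vec n"
  using goodY_U Uc by blast

lemma rl_c: "rl v \<Longrightarrow> v \<in> carrier_vec n" unfolding rl_def using Uc by simp

lemma rl_decomp_Y:
  assumes G: "goodY Y" and y: "y \<in> Y"
  shows "\<exists>a b. rl a \<and> rl b \<and> a \<in> Y \<and> b \<in> Y \<and> y = a + \<i> \<cdot>\<^sub>v b"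
proof -
  have sY: "subsp n Y" using G unfolding goodY_def by simp
  have yU: "y \<in> U" using goodY_U[OF G y] .
  have yc: "y \<in> carrier_vec n" using Uc yU by simp
  have KyY: "K y \<in> Y" using G y unfolding goodY_def by simp
  have Ky: "K y \<in> U" using K_U yU by simp
  have Kyc: "K y \<in> carrier_vec n" using Uc Ky by simp
  define a where "a = complex_of_real (1/2) \<cdot>\<^sub>v (y + K y)"
  define b where "b = (- \<i> / 2) \<cdot>\<^sub>v (y + (-1) \<cdot>\<^sub>v K y)"
  have aY: "a \<in> Y" unfolding a_def using y KyY subspD(3,4)[OF sY] by simp
  have bY: "b \<in> Y" unfolding b_def using y KyY subspD(3,4)[OF sY] by simp
  have s1: "y + K y \<in> U" using yU Ky subspD(3)[OF sU] by simp
  have s2: "(-1) \<cdot>\<^sub>v K y \<in> U" using Ky subspD(4)[OF sU] by simp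
  have s3: "y + (-1) \<cdot>\<^sub>v K y \<in> U" using yU s2 subspD(3)[OF sU] by simp
  have "K (y + K y) = y + K y" using K_add[OF yU Ky] KK[OF yU] Kyc yc by (simp add: comm_add_vec)
  hence ra: "rl a" unfolding rl_def a_def using K_smult s1 subspD(4)[OF sU] by simp
  have "K (y + (-1) \<cdot>\<^sub>v K y) = K y + (-1) \<cdot>\<^sub>v y"
    using K_add[OF yU s2] K_smult[OF Ky] KK[OF yU] by simp
  hence "K b = (\<i> / 2) \<cdot>\<^sub>v (K y + (-1) \<cdot>\<^sub>v y)" unfolding b_def using K_smult[OF s3] by simp
  also have "\<dots> = b" unfolding b_def using yc Kyc by (intro eq_vecI) (auto simp: field_simps)
  finally have rb: "rl b" unfolding rl_def b_def using s3 subspD(4)[OF sU] by simp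
  have "y = a + \<i> \<cdot>\<^sub>v b" unfolding a_def b_def using yc Kyc by (intro eq_vecI) (auto simp: field_simps)
  thus ?thesis using ra rb aY bY by blast
qed

definition aa :: "nat \<Rightarrow> complex vec \<Rightarrow> complex" where "aa k v = l ((N ^^ k) v) v"

lemma aa_real: "rl v \<Longrightarrow> aa k v = complex_of_real (Re (aa k v))"
proof -
  assume v: "rl v"
  have "cnj (aa k v) = aa k v" unfolding aa_def using rl_real[OF rl_Nk[OF v] v] .
  thus ?thesis by (auto simp: complex_eq_iff)
qed

lemma l_Nk_Nk: "v \<in> U \<Longrightarrow> l ((N ^^ i) v) ((N ^^ j) v) = aa (i + j) v"
proof -
  assume v: "v \<in> U"
  have "l ((N ^^ i) v) ((N ^^ j) v) = l ((N ^^ j) ((N ^^ i) v)) v"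
    using Nk_sa[of "(N ^^ i) v" v j] Nk_U v by simp
  thus ?thesis unfolding aa_def by (simp add: funpow_apply_add add.commute)
qed

lemma aa_high:
  assumes G: "goodY Y" and v: "v \<in> Y" and kill: "\<forall>y\<in>Y. (N ^^ s) y = 0\<^sub>v n" and k: "k \<ge> s"
  shows "aa k v = 0"
proof -
  have "(N ^^ k) v = (N ^^ (k - s)) ((N ^^ s) v)" using k by (simp add: funpow_apply_add)
  also have "\<dots> = 0\<^sub>v n" using kill v Nk_zero by simp
  finally show ?thesis unfolding aa_def using herm_zero1[OF herm] goodY_c[OF G v] by simp
qed

lemma aa_upd:
  assumes v: "rl v"
  shows "aa k (v + complex_of_real r \<cdot>\<^sub>v (N ^^ p) v)
    = aa k v + 2 * complex_of_real r * aa (k + p) v + (complex_of_real r)^2 * aa (k + 2 * p) v"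
proof -
  let ?a = "complex_of_real r"
  have vU: "v \<in> U" using v unfolding rl_def by simp
  have vc: "v \<in> carrier_vec n" using Uc vU by simp
  have pU: "(N ^^ p) v \<in> U" using Nk_U vU by simp
  have apU: "?a \<cdot>\<^sub>v (N ^^ p) v \<in> U" using pU subspD(4)[OF sU] by simp
  have c: "\<And>k. (N ^^ k) v \<in> carrier_vec n" using Nk_U vU Uc by blast
  have Nx: "(N ^^ k) (v + ?a \<cdot>\<^sub>v (N ^^ p) v) = (N ^^ k) v + ?a \<cdot>\<^sub>v (N ^^ (k + p)) v"
    using Nk_add[OF vU apU] Nk_smult[OF pU] by (simp add: funpow_apply_add)
  have "aa k (v + ?a \<cdot>\<^sub>v (N ^^ p) v) = l ((N ^^ k) v + ?a \<cdot>\<^sub>v (N ^^ (k + p)) v) (v + ?a \<cdot>\<^sub>v (N ^^ p) v)"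
    unfolding aa_def Nx ..
  also have "\<dots> = l ((N ^^ k) v) v + cnj ?a * l ((N ^^ k) v) ((N ^^ p) v)
      + ?a * l ((N ^^ (k + p)) v) v + ?a * cnj ?a * l ((N ^^ (k + p)) v) ((N ^^ p) v)"
    using vc c by (simp add: herm_add1[OF herm] herm_add2[OF herm] herm_smult1[OF herm] herm_smult2[OF herm] algebra_simps)
  also have "\<dots> = aa k v + ?a * aa (k + p) v + ?a * aa (k + p) v + ?a * ?a * aa (k + 2 * p) v"
  proof -
    have h1: "l ((N^^k) v) ((N^^p) v) = aa (k+p) v" using l_Nk_Nk vU by simp
    have h2: "l ((N^^(k+p)) v) v = aa (k+p) v" unfolding aa_def ..
    have h3: "l ((N^^(k+p)) v) ((N^^p) v) = aa (k+2*p) v" using l_Nk_Nk[of v "k+p" p] vU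
      by (simp add: mult_2 add.assoc)
    have h4: "l ((N^^k) v) v = aa k v" unfolding aa_def ..
    show ?thesis unfolding h1 h2 h3 h4 by simp
  qed
  finally show ?thesis by (simp add: power2_eq_square algebra_simps)
qed

definition good_chain :: "nat \<times> complex \<times> complex vec \<Rightarrow> bool" where
  "good_chain c \<longleftrightarrow> (case c of (s, e, v) \<Rightarrow> 0 < s \<and> rl v \<and> (e = 1 \<or> e = -1) \<and> (N ^^ s) v = 0\<^sub>v n
     \<and> (\<forall>i j. l ((N ^^ i) v) ((N ^^ j) v) = (if i + j = s - 1 then e else 0)))"

lemma exists_head:
  assumes G: "goodY Y" and y0: "y0 \<in> Y" "y0 \<noteq> 0\<^sub>v n"
  shows "\<exists>s e v. good_chain (s, e, v) \<and> v \<in> Y \<and> (\<forall>y\<in>Y. (N ^^ s) y = 0\<^sub>v n)"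
proof -
  have sY: "subsp n Y" using G unfolding goodY_def by simp
  define s where "s = (LEAST k. \<forall>y\<in>Y. (N ^^ k) y = 0\<^sub>v n)"
  have ex: "\<forall>y\<in>Y. (N ^^ n) y = 0\<^sub>v n" using nilp goodY_U[OF G] by blast
  have kill: "\<forall>y\<in>Y. (N ^^ s) y = 0\<^sub>v n" unfolding s_def by (rule LeastI[of "\<lambda>k. \<forall>y\<in>Y. (N ^^ k) y = 0\<^sub>v n" n, OF ex])
  have spos: "s > 0"
  proof (rule ccontr)
    assume "\<not> s > 0" hence "s = 0" by simp
    thus False using kill y0 by simp
  qed
  have "\<not> (\<forall>y\<in>Y. (N ^^ (s - 1)) y = 0\<^sub>v n)"
    using not_less_Least[of "s - 1" "\<lambda>k. \<forall>y\<in>Y. (N ^^ k) y = 0\<^sub>v n"] spos unfolding s_def by simp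
  then obtain y1 where y1: "y1 \<in> Y" "(N ^^ (s - 1)) y1 \<noteq> 0\<^sub>v n" by auto
  have "(N ^^ (s - 1)) y1 \<in> Y" using goodY_Nk[OF G y1(1)] .
  then obtain w where w: "w \<in> Y" "l ((N ^^ (s - 1)) y1) w \<noteq> 0"
    using G y1(2) unfolding goodY_def by blast
  define B where "B = (\<lambda>p q. l ((N ^^ (s - 1)) p) q)"
  have Bsym: "\<And>p q. rl p \<Longrightarrow> rl q \<Longrightarrow> B q p = B p q"
  proof -
    fix p q assume p: "rl p" and q: "rl q"
    have pU: "p \<in> U" and qU: "q \<in> U" using p q unfolding rl_def by auto
    have "B q p = l q ((N ^^ (s - 1)) p)" unfolding B_def using Nk_sa qU pU by simp
    also have "\<dots> = B p q" unfolding B_def using rl_sym[OF q rl_Nk[OF p]] .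
    finally show "B q p = B p q" .
  qed
  obtain a1 b1 where ab1: "rl a1" "rl b1" "a1 \<in> Y" "b1 \<in> Y" "y1 = a1 + \<i> \<cdot>\<^sub>v b1"
    using rl_decomp_Y[OF G y1(1)] by blast
  obtain a2 b2 where ab2: "rl a2" "rl b2" "a2 \<in> Y" "b2 \<in> Y" "w = a2 + \<i> \<cdot>\<^sub>v b2"
    using rl_decomp_Y[OF G w(1)] by blast
  have "\<exists>p q. rl p \<and> rl q \<and> p \<in> Y \<and> q \<in> Y \<and> B p q \<noteq> 0"
  proof (rule ccontr)
    assume no: "\<not> ?thesis"
    have z: "B a1 a2 = 0" "B a1 b2 = 0" "B b1 a2 = 0" "B b1 b2 = 0" using no ab1 ab2 by blast+
    have a1U: "a1 \<in> U" and b1U: "b1 \<in> U" using ab1 unfolding rl_def by auto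
    have ib1: "\<i> \<cdot>\<^sub>v b1 \<in> U" using b1U subspD(4)[OF sU] by simp
    have Ny: "(N ^^ (s - 1)) y1 = (N ^^ (s - 1)) a1 + \<i> \<cdot>\<^sub>v (N ^^ (s - 1)) b1"
      unfolding ab1(5) using Nk_add[OF a1U ib1] Nk_smult[OF b1U] by simp
    have c1: "(N ^^ (s - 1)) a1 \<in> carrier_vec n" "(N ^^ (s - 1)) b1 \<in> carrier_vec n"
      using rl_c rl_Nk ab1 by blast+
    have c2: "a2 \<in> carrier_vec n" "b2 \<in> carrier_vec n" using rl_c ab2 by blast+
    have "l ((N ^^ (s - 1)) y1) w = B a1 a2 + cnj \<i> * B a1 b2 + \<i> * B b1 a2 + \<i> * cnj \<i> * B b1 b2"
      unfolding Ny ab2(5) B_def using c1 c2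
      by (simp add: herm_add1[OF herm] herm_add2[OF herm] herm_smult1[OF herm] herm_smult2[OF herm] algebra_simps)
    thus False using w(2) z by simp
  qed
  then obtain p q where pq: "rl p" "rl q" "p \<in> Y" "q \<in> Y" "B p q \<noteq> 0" by blast
  have "\<exists>v0. rl v0 \<and> v0 \<in> Y \<and> B v0 v0 \<noteq> 0"
  proof (cases "B p p = 0 \<and> B q q = 0")
    case True
    have pU: "p \<in> U" and qU: "q \<in> U" using pq unfolding rl_def by auto
    have c1: "(N ^^ (s - 1)) p \<in> carrier_vec n" "(N ^^ (s - 1)) q \<in> carrier_vec n"
      using rl_c rl_Nk pq by blast+
    have c2: "p \<in> carrier_vec n" "q \<in> carrier_vec n" using rl_c pq by blast+
    have "B (p + q) (p + q) = B p p + B p q + B q p + B q q"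
      unfolding B_def using Nk_add[OF pU qU] c1 c2
      by (simp add: herm_add1[OF herm] herm_add2[OF herm] algebra_simps)
    also have "\<dots> = 2 * B p q" using True Bsym[OF pq(1,2)] by simp
    finally have "B (p + q) (p + q) \<noteq> 0" using pq(5) by simp
    moreover have "rl (p + q)" using rl_add pq by simp
    moreover have "p + q \<in> Y" using pq subspD(3)[OF sY] by simp
    ultimately show ?thesis by blast
  next
    case False thus ?thesis using pq by blast
  qed
  then obtain v0 where v0: "rl v0" "v0 \<in> Y" "aa (s - 1) v0 \<noteq> 0" unfolding B_def aa_def by blast
  have adj: "\<And>j. j + 1 \<le> s \<Longrightarrow> \<exists>v. rl v \<and> v \<in> Y \<and> aa (s - 1) v = aa (s - 1) v0
      \<and> (\<forall>i. 1 \<le> i \<and> i \<le> j \<longrightarrow> aa (s - 1 - i) v = 0)"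
  proof -
    fix j show "j + 1 \<le> s \<Longrightarrow> \<exists>v. rl v \<and> v \<in> Y \<and> aa (s - 1) v = aa (s - 1) v0
      \<and> (\<forall>i. 1 \<le> i \<and> i \<le> j \<longrightarrow> aa (s - 1 - i) v = 0)"
    proof (induction j)
      case 0 thus ?case using v0 by auto
    next
      case (Suc j)
      then obtain v where v: "rl v" "v \<in> Y" "aa (s - 1) v = aa (s - 1) v0"
        "\<And>i. 1 \<le> i \<Longrightarrow> i \<le> j \<Longrightarrow> aa (s - 1 - i) v = 0" by auto
      define c where "c = Re (aa (s - 1) v)"
      define d where "d = Re (aa (s - 2 - j) v)"
      have cnz: "c \<noteq> 0" using v(3) v0(3) aa_real[OF v(1), of "s - 1"] unfolding c_def by auto
      define r where "r = - d / (2 * c)"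
      define v' where "v' = v + complex_of_real r \<cdot>\<^sub>v (N ^^ (Suc j)) v"
      have rv': "rl v'" unfolding v'_def by (intro rl_add rl_smult rl_Nk v(1))
      have v'Y: "v' \<in> Y" unfolding v'_def
        by (intro subspD(3)[OF sY] subspD(4)[OF sY] goodY_Nk[OF G v(2)] v(2))
      have upd: "\<And>k. aa k v' = aa k v + 2 * complex_of_real r * aa (k + Suc j) v
          + (complex_of_real r)^2 * aa (k + 2 * Suc j) v"
        unfolding v'_def by (rule aa_upd[OF v(1)])
      have hi: "\<And>k. k \<ge> s \<Longrightarrow> aa k v = 0" using aa_high[OF G v(2) kill] by simp
      have "aa (s - 1) v' = aa (s - 1) v" using upd[of "s - 1"] hi spos by simp
      moreover have "\<forall>i. 1 \<le> i \<and> i \<le> Suc j \<longrightarrow> aa (s - 1 - i) v' = 0"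
      proof (intro allI impI)
        fix i assume i: "1 \<le> i \<and> i \<le> Suc j"
        show "aa (s - 1 - i) v' = 0"
        proof (cases "i \<le> j")
          case True
          have "aa (s - 1 - i + Suc j) v = 0" "aa (s - 1 - i + 2 * Suc j) v = 0"
            using hi i True Suc.prems by auto
          thus ?thesis using upd[of "s - 1 - i"] v(4)[of i] i True by simp
        next
          case False
          hence ii: "i = Suc j" using i by simp
          have e1: "s - 1 - i + Suc j = s - 1" using ii Suc.prems by simp
          have e2: "aa (s - 1 - i + 2 * Suc j) v = 0" using hi ii Suc.prems by simp
          have e3: "s - 1 - i = s - 2 - j" using ii by simp
          have e4: "aa (s - 1 - i) v = complex_of_real d" unfolding d_def e3 by (rule aa_real[OF v(1)])
          have ac: "aa (s - 1) v = complex_of_real c" unfolding c_def by (rule aa_real[OF v(1)])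
          have "aa (s - 1 - i) v' = complex_of_real d + 2 * complex_of_real r * complex_of_real c"
            using upd[of "s - 1 - i"] unfolding e1 e2 e4 ac by simp
          also have "\<dots> = 0"
          proof -
            have "d + 2 * r * c = 0" unfolding r_def using cnz by (simp add: field_simps)
            hence "complex_of_real (d + 2 * r * c) = 0" by simp
            thus ?thesis by simp
          qed
          finally show ?thesis .
        qed
      qed
      ultimately show ?case using rv' v'Y v(3) by metis
    qed
  qed
  obtain v1 where v1: "rl v1" "v1 \<in> Y" "aa (s - 1) v1 = aa (s - 1) v0"
    "\<And>i. 1 \<le> i \<Longrightarrow> i \<le> s - 1 \<Longrightarrow> aa (s - 1 - i) v1 = 0"
    using adj[of "s - 1"] spos by auto
  define c where "c = Re (aa (s - 1) v1)"
  have cnz: "c \<noteq> 0" using v1(3) v0(3) aa_real[OF v1(1), of "s - 1"] unfolding c_def by auto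
  define t where "t = 1 / sqrt \<bar>c\<bar>"
  define v where "v = complex_of_real t \<cdot>\<^sub>v v1"
  define e where "e = complex_of_real (sgn c)"
  have rv: "rl v" unfolding v_def using rl_smult v1(1) by simp
  have vY: "v \<in> Y" unfolding v_def using v1(2) subspD(4)[OF sY] by simp
  have vU: "v \<in> U" using rv unfolding rl_def by simp
  have v1U: "v1 \<in> U" using v1(1) unfolding rl_def by simp
  have aav: "\<And>k. aa k v = complex_of_real (t * t) * aa k v1"
  proof -
    fix k
    have "(N ^^ k) v = complex_of_real t \<cdot>\<^sub>v (N ^^ k) v1" unfolding v_def using Nk_smult v1U by simp
    thus "aa k v = complex_of_real (t * t) * aa k v1" unfolding aa_def v_def
      using rl_c[OF rl_Nk[OF v1(1)]] rl_c[OF v1(1)]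
      by (simp add: herm_smult1[OF herm] herm_smult2[OF herm])
  qed
  have "t * t * c = sgn c" unfolding t_def using cnz
    by (simp add: sgn_real_def divide_simps abs_if) 
  hence top: "aa (s - 1) v = e" unfolding e_def using aav[of "s - 1"] aa_real[OF v1(1), of "s - 1"]
    unfolding c_def by (metis of_real_mult)
  have hi: "\<And>k. k \<ge> s \<Longrightarrow> aa k v = 0" using aa_high[OF G vY kill] by simp
  have lo: "\<And>k. k < s - 1 \<Longrightarrow> aa k v = 0"
  proof -
    fix k assume k: "k < s - 1"
    have "aa (s - 1 - (s - 1 - k)) v1 = 0" using v1(4)[of "s - 1 - k"] k by simp
    hence "aa k v1 = 0" using k by simp
    thus "aa k v = 0" using aav by simp
  qed
  have gram: "\<forall>i j. l ((N ^^ i) v) ((N ^^ j) v) = (if i + j = s - 1 then e else 0)"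
  proof (intro allI)
    fix i j
    have "l ((N ^^ i) v) ((N ^^ j) v) = aa (i + j) v" using l_Nk_Nk vU by simp
    also have "\<dots> = (if i + j = s - 1 then e else 0)"
      using top hi lo by (cases "i + j < s - 1"; cases "i + j \<ge> s"; auto)
    finally show "l ((N ^^ i) v) ((N ^^ j) v) = (if i + j = s - 1 then e else 0)" .
  qed
  have e1: "e = 1 \<or> e = -1" unfolding e_def using cnz by (cases "c > 0") auto
  have "(N ^^ s) v = 0\<^sub>v n" using kill vY by simp
  hence "good_chain (s, e, v)" unfolding good_chain_def using spos rv e1 gram by simp
  thus ?thesis using vY kill by blast
qed

end


context core begin

definition chains :: "(nat \<times> complex \<times> complex vec) list \<Rightarrow> complex vec list" where
  "chains Lc = concat (map (\<lambda>(s, e, v). chain s v) Lc)"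

lemma chains_Nil[simp]: "chains [] = []" unfolding chains_def by simp
lemma chains_Cons[simp]: "chains ((s, e, v) # Lc) = chain s v @ chains Lc" unfolding chains_def by simp

fun good_list :: "(nat \<times> complex \<times> complex vec) list \<Rightarrow> bool" where
  "good_list [] = True"
| "good_list ((s, e, v) # Lc) = (good_chain (s, e, v)
     \<and> (\<forall>x\<in>set (chain s v). \<forall>y\<in>set (chains Lc). l x y = 0 \<and> l y x = 0) \<and> good_list Lc)"

lemma good_list_chain: "good_list Lc \<Longrightarrow> c \<in> set Lc \<Longrightarrow> good_chain c"
  by (induction Lc rule: good_list.induct) auto

lemma basis_Nil: "(\<forall>y\<in>Y. y = 0\<^sub>v n) \<Longrightarrow> is_basis_of n Y []"
proof (rule basisI)
  show "indep n []" unfolding indep_def by (auto intro: eq_vecI)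
  fix v assume "\<forall>y\<in>Y. y = 0\<^sub>v n" "v \<in> Y"
  thus "\<exists>c\<in>carrier_vec (length []). v = lin_comb n [] c"
    by (intro bexI[of _ "0\<^sub>v 0"]) (auto simp: lin_comb_def simp flip: zero_vec_def)
qed auto

context
  fixes Y s e v
  assumes G: "goodY Y" and gc: "good_chain (s, e, v)" and vY: "v \<in> Y"
    and kill: "\<forall>y\<in>Y. (N ^^ s) y = 0\<^sub>v n"
begin

lemma sY: "subsp n Y" using G unfolding goodY_def by simp

lemma spos: "0 < s" using gc unfolding good_chain_def by simp
lemma rlv: "rl v" using gc unfolding good_chain_def by simp
lemma e1: "e = 1 \<or> e = -1" using gc unfolding good_chain_def by simp
lemma ee: "e * e = 1" using e1 by auto
lemma enz: "e \<noteq> 0" using e1 by auto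
lemma gram: "l ((N ^^ i) v) ((N ^^ j) v) = (if i + j = s - 1 then e else 0)"
  using gc unfolding good_chain_def by simp
lemma Nsv: "(N ^^ s) v = 0\<^sub>v n" using gc unfolding good_chain_def by simp

lemma vU: "v \<in> U" using rlv unfolding rl_def by simp
lemma NvY: "(N ^^ i) v \<in> Y" using goodY_Nk[OF G vY] .
lemma Nvc: "(N ^^ i) v \<in> carrier_vec n" using goodY_c[OF G NvY] .
lemma chainY: "set (chain s v) \<subseteq> Y" using NvY by (auto simp: in_set_chain)
lemma chainc: "set (chain s v) \<subseteq> carrier_vec n" using Nvc by (auto simp: in_set_chain)

lemma chain_pair:
  assumes c: "c \<in> carrier_vec s" and j: "j < s"
  shows "l (lin_comb n (chain s v) c) ((N ^^ j) v) = c $ j * e"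
proof -
  have "l (lin_comb n (chain s v) c) ((N ^^ j) v) = (\<Sum>i<s. c $ i * l (chain s v ! i) ((N ^^ j) v))"
    using herm_lin_comb1[OF herm chainc Nvc] by simp
  also have "\<dots> = (\<Sum>i<s. if i = j then c $ j * e else 0)"
  proof (intro sum.cong refl)
    fix i assume i: "i \<in> {..<s}"
    have "l (chain s v ! i) ((N ^^ j) v) = (if s - 1 - i + j = s - 1 then e else 0)"
      using i by (simp add: chain_nth gram)
    also have "\<dots> = (if i = j then e else 0)" using i j by auto
    finally show "c $ i * l (chain s v ! i) ((N ^^ j) v) = (if i = j then c $ j * e else 0)" by auto
  qed
  also have "\<dots> = c $ j * e" using j by simp
  finally show ?thesis .
qed

definition Yp where "Yp = {y \<in> Y. \<forall>i<s. l y ((N ^^ i) v) = 0}"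

lemma Yp_sub: "Yp \<subseteq> Y" unfolding Yp_def by auto

lemma proj:
  assumes w: "w \<in> Y"
  shows "\<exists>c\<in>carrier_vec s. w + (-1) \<cdot>\<^sub>v lin_comb n (chain s v) c \<in> Yp"
proof -
  define c where "c = vec s (\<lambda>i. e * l w ((N ^^ i) v))"
  have cc: "c \<in> carrier_vec s" unfolding c_def by simp
  have wc: "w \<in> carrier_vec n" using goodY_c[OF G w] .
  have lcY: "lin_comb n (chain s v) c \<in> Y" using lin_comb_in_subsp[OF sY chainY] .
  have inY: "w + (-1) \<cdot>\<^sub>v lin_comb n (chain s v) c \<in> Y"
    using w lcY subspD(3,4)[OF sY] by simp
  have "\<forall>i<s. l (w + (-1) \<cdot>\<^sub>v lin_comb n (chain s v) c) ((N ^^ i) v) = 0"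
  proof (intro allI impI)
    fix i assume i: "i < s"
    have "l (w + (-1) \<cdot>\<^sub>v lin_comb n (chain s v) c) ((N ^^ i) v)
       = l w ((N ^^ i) v) - l (lin_comb n (chain s v) c) ((N ^^ i) v)"
      using wc Nvc by (simp add: herm_add1[OF herm] herm_smult1[OF herm])
    also have "\<dots> = l w ((N ^^ i) v) - e * l w ((N ^^ i) v) * e"
      using chain_pair[OF cc i] i unfolding c_def by simp
    also have "\<dots> = 0" using ee by (simp add: algebra_simps)
    finally show "l (w + (-1) \<cdot>\<^sub>v lin_comb n (chain s v) c) ((N ^^ i) v) = 0" .
  qed
  thus ?thesis using inY cc unfolding Yp_def by blast
qed

lemma goodY_Yp: "goodY Yp"
  unfolding goodY_def
proof (intro conjI ballI impI)
  show "subsp n Yp" unfolding subsp_def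
  proof (intro conjI ballI allI)
    show "Yp \<subseteq> carrier_vec n" using Yp_sub subspD(1)[OF sY] by auto
    show "0\<^sub>v n \<in> Yp" unfolding Yp_def using subspD(2)[OF sY] Nvc herm_zero1[OF herm] by simp
  next
    fix a b assume a: "a \<in> Yp" and b: "b \<in> Yp"
    have ac: "a \<in> carrier_vec n" "b \<in> carrier_vec n" using a b Yp_sub subspD(1)[OF sY] by auto
    thus "a + b \<in> Yp" using a b unfolding Yp_def using subspD(3)[OF sY] Nvc
      by (auto simp: herm_add1[OF herm])
  next
    fix z a assume a: "a \<in> Yp"
    thus "z \<cdot>\<^sub>v a \<in> Yp" unfolding Yp_def using subspD(1,4)[OF sY] Nvc
      by (auto simp: herm_smult1[OF herm])
  qed
  show "Yp \<subseteq> U" using Yp_sub G unfolding goodY_def by auto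
next
  fix y assume y: "y \<in> Yp"
  have yY: "y \<in> Y" and orth: "\<And>i. i < s \<Longrightarrow> l y ((N ^^ i) v) = 0" using y unfolding Yp_def by auto
  have yU: "y \<in> U" using goodY_U[OF G yY] .
  have yc: "y \<in> carrier_vec n" using Uc yU by simp
  have KY: "K y \<in> Y" using G yY unfolding goodY_def by simp
  have "\<forall>i<s. l (K y) ((N ^^ i) v) = 0"
  proof (intro allI impI)
    fix i assume i: "i < s"
    have r: "rl ((N ^^ i) v)" using rl_Nk[OF rlv] .
    have "l (K y) ((N ^^ i) v) = l (K ((N ^^ i) v)) y" using Ksa yU Nk_U vU by simp
    also have "\<dots> = l ((N ^^ i) v) y" using r unfolding rl_def by simp
    also have "\<dots> = cnj (l y ((N ^^ i) v))" using herm_sym[OF herm] yc Nvc by blast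
    finally show "l (K y) ((N ^^ i) v) = 0" using orth[OF i] by simp
  qed
  thus "K y \<in> Yp" using KY unfolding Yp_def by simp
  have NY: "N y \<in> Y" using G yY unfolding goodY_def by simp
  have "\<forall>i<s. l (N y) ((N ^^ i) v) = 0"
  proof (intro allI impI)
    fix i assume i: "i < s"
    have "l (N y) ((N ^^ i) v) = l y ((N ^^ Suc i) v)" using Nsa yU Nk_U vU by simp
    also have "\<dots> = 0"
    proof (cases "Suc i < s")
      case True thus ?thesis using orth[of "Suc i"] by (simp del: funpow.simps)
    next
      case False hence "Suc i = s" using i by simp
      thus ?thesis using Nsv herm_zero2[OF herm yc] by simp
    qed
    finally show "l (N y) ((N ^^ i) v) = 0" .
  qed
  thus "N y \<in> Yp" using NY unfolding Yp_def by simp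
next
  fix u assume u: "u \<in> Yp" and o: "\<forall>w\<in>Yp. l u w = 0"
  have uY: "u \<in> Y" and orth: "\<And>i. i < s \<Longrightarrow> l u ((N ^^ i) v) = 0" using u unfolding Yp_def by auto
  have uc: "u \<in> carrier_vec n" using goodY_c[OF G uY] .
  have "\<forall>w\<in>Y. l u w = 0"
  proof
    fix w assume w: "w \<in> Y"
    have wc: "w \<in> carrier_vec n" using goodY_c[OF G w] .
    obtain c where c: "c \<in> carrier_vec s" "w + (-1) \<cdot>\<^sub>v lin_comb n (chain s v) c \<in> Yp"
      using proj[OF w] by auto
    define p where "p = w + (-1) \<cdot>\<^sub>v lin_comb n (chain s v) c"
    have pc: "p \<in> carrier_vec n" unfolding p_def using wc by simp
    have we: "w = p + lin_comb n (chain s v) c" unfolding p_def using wc by (intro eq_vecI) auto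
    have "l u w = l u p + l u (lin_comb n (chain s v) c)" unfolding we using uc pc
      by (simp add: herm_add2[OF herm])
    also have "l u p = 0" using o c(2) unfolding p_def by simp
    also have "l u (lin_comb n (chain s v) c) = (\<Sum>i<s. cnj (c $ i) * l u (chain s v ! i))"
      using herm_lin_comb2[OF herm chainc uc] by simp
    also have "\<dots> = 0" using orth by (intro sum.neutral) (auto simp: chain_nth)
    finally show "l u w = 0" by simp
  qed
  thus "u = 0\<^sub>v n" using G uY unfolding goodY_def by blast
qed

lemma indep_chain_app:
  assumes B: "set B \<subseteq> Yp" and ind: "indep n B"
  shows "indep n (chain s v @ B)"
  unfolding indep_def
proof (intro ballI impI)
  fix c assume c: "c \<in> carrier_vec (length (chain s v @ B))" and z: "lin_comb n (chain s v @ B) c = 0\<^sub>v n"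
  define c1 where "c1 = vec s (\<lambda>i. c $ i)"
  define c2 where "c2 = vec (length B) (\<lambda>i. c $ (s + i))"
  have Bc: "set B \<subseteq> carrier_vec n" using B Yp_sub subspD(1)[OF sY] by auto
  have sYp: "subsp n Yp" using goodY_Yp unfolding goodY_def by simp
  have z2: "lin_comb n (chain s v) c1 + lin_comb n B c2 = 0\<^sub>v n"
    using z unfolding lin_comb_append c1_def c2_def by simp
  have lBYp: "lin_comb n B c2 \<in> Yp" using lin_comb_in_subsp[OF sYp B] .
  have c1z: "\<forall>j<s. c1 $ j = 0"
  proof (intro allI impI)
    fix j assume j: "j < s"
    have "0 = l (lin_comb n (chain s v) c1 + lin_comb n B c2) ((N ^^ j) v)"
      unfolding z2 using herm_zero1[OF herm Nvc] by simp
    also have "\<dots> = l (lin_comb n (chain s v) c1) ((N ^^ j) v) + l (lin_comb n B c2) ((N ^^ j) v)"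
      using Nvc by (simp add: herm_add1[OF herm])
    also have "l (lin_comb n B c2) ((N ^^ j) v) = 0" using lBYp j unfolding Yp_def by simp
    also have "l (lin_comb n (chain s v) c1) ((N ^^ j) v) = c1 $ j * e"
      using chain_pair[of c1 j] j unfolding c1_def by simp
    finally show "c1 $ j = 0" using enz by simp
  qed
  hence "c1 = 0\<^sub>v s" unfolding c1_def by (intro eq_vecI) auto
  hence "lin_comb n B c2 = 0\<^sub>v n" using z2 by (metis lin_comb_carrier lin_comb_zero length_chain left_zero_vec)
  hence "c2 = 0\<^sub>v (length B)" using ind unfolding indep_def c2_def by simp
  hence c2z: "\<forall>i<length B. c $ (s + i) = 0" unfolding c2_def by (metis index_vec index_zero_vec(1))
  show "c = 0\<^sub>v (length (chain s v @ B))"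
  proof (rule eq_vecI)
    fix i assume "i < dim_vec (0\<^sub>v (length (chain s v @ B)) :: complex vec)"
    hence i: "i < s + length B" by simp
    show "c $ i = 0\<^sub>v (length (chain s v @ B)) $ i"
    proof (cases "i < s")
      case True thus ?thesis using c1z i unfolding c1_def by (metis index_vec index_zero_vec(1) length_append length_chain)
    next
      case False
      hence "c $ i = c $ (s + (i - s))" by simp
      also have "\<dots> = 0" using c2z[rule_format, of "i - s"] i False by simp
      finally show ?thesis using i by simp
    qed
  qed (use c in simp)
qed

lemma basis_step:
  assumes B: "is_basis_of n Yp B"
  shows "is_basis_of n Y (chain s v @ B)"
proof -
  have sYp: "subsp n Yp" using goodY_Yp unfolding goodY_def by simp
  have BYp: "set B \<subseteq> Yp" using B unfolding is_basis_of_def by simp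
  have Bc: "set B \<subseteq> carrier_vec n" using BYp Yp_sub subspD(1)[OF sY] by auto
  have indB: "indep n B" using basis_indep[OF B subspD(2)[OF sYp]] .
  show ?thesis
  proof (rule basisI)
    show "set (chain s v @ B) \<subseteq> Y" using chainY BYp Yp_sub by auto
    show "set (chain s v @ B) \<subseteq> carrier_vec n" using chainc Bc by auto
    show "indep n (chain s v @ B)" using indep_chain_app[OF BYp indB] .
  next
    fix w assume w: "w \<in> Y"
    have wc: "w \<in> carrier_vec n" using goodY_c[OF G w] .
    obtain c where c: "c \<in> carrier_vec s" "w + (-1) \<cdot>\<^sub>v lin_comb n (chain s v) c \<in> Yp"
      using proj[OF w] by auto
    obtain d where d: "d \<in> carrier_vec (length B)" "w + (-1) \<cdot>\<^sub>v lin_comb n (chain s v) c = lin_comb n B d"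
      using B c(2) unfolding is_basis_of_def by blast
    have "w = lin_comb n (chain s v) c + lin_comb n B d"
      unfolding d(2)[symmetric] using wc by (intro eq_vecI) auto
    also have "\<dots> = lin_comb n (chain s v @ B) (c @\<^sub>v d)"
      using lin_comb_append_vec[of c "chain s v" d B n] c d by simp
    finally show "\<exists>c\<in>carrier_vec (length (chain s v @ B)). w = lin_comb n (chain s v @ B) c"
      using c(1) d(1) by (intro bexI[of _ "c @\<^sub>v d"]) auto
  qed
qed

end

end


context core begin

lemma core_ind:
  "goodY Y \<Longrightarrow> (\<forall>B. set B \<subseteq> Y \<longrightarrow> indep n B \<longrightarrow> length B \<le> M) \<Longrightarrow>
   \<exists>Lc. good_list Lc \<and> sorted_wrt (\<ge>) (map fst Lc) \<and> (\<forall>c\<in>set Lc. snd (snd c) \<in> Y)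
     \<and> is_basis_of n Y (chains Lc)"
proof (induction M arbitrary: Y rule: less_induct)
  case (less M Y)
  note G = less.prems(1) and bd = less.prems(2)
  show ?case
  proof (cases "\<forall>y\<in>Y. y = 0\<^sub>v n")
    case True
    thus ?thesis using basis_Nil[OF True] by (intro exI[of _ "[]"]) auto
  next
    case False
    then obtain y0 where y0: "y0 \<in> Y" "y0 \<noteq> 0\<^sub>v n" by auto
    obtain s e v where gc: "good_chain (s, e, v)" and vY: "v \<in> Y"
      and kill: "\<forall>y\<in>Y. (N ^^ s) y = 0\<^sub>v n"
      using exists_head[OF G y0] by blast
    note ctx = G gc vY kill
    have spos: "0 < s" using spos[OF ctx] .
    have i0: "indep n []" unfolding indep_def by (auto intro!: eq_vecI)
    have indc: "indep n (chain s v)"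
      using indep_chain_app[OF ctx _ i0] by simp
    have "s \<le> M" using bd chainY[OF ctx] indc by fastforce
    hence lt: "M - s < M" using spos by simp
    have bdp: "\<forall>B. set B \<subseteq> Yp Y s v \<longrightarrow> indep n B \<longrightarrow> length B \<le> M - s"
    proof (intro allI impI)
      fix B assume B: "set B \<subseteq> Yp Y s v" "indep n B"
      have "indep n (chain s v @ B)" using indep_chain_app[OF ctx B] .
      moreover have "set (chain s v @ B) \<subseteq> Y" using chainY[OF ctx] B(1) Yp_sub[OF ctx] by auto
      ultimately have "length (chain s v @ B) \<le> M" using bd by blast
      thus "length B \<le> M - s" by simp
    qed
    obtain Lc' where Lc': "good_list Lc'" "sorted_wrt (\<ge>) (map fst Lc')"
      "\<forall>c\<in>set Lc'. snd (snd c) \<in> Yp Y s v" "is_basis_of n (Yp Y s v) (chains Lc')"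
      using less.IH[OF lt goodY_Yp[OF ctx] bdp] by blast
    have chYp: "set (chains Lc') \<subseteq> Yp Y s v" using Lc'(4) unfolding is_basis_of_def by simp
    have sYp: "Yp Y s v \<subseteq> Y" using Yp_sub[OF ctx] .
    have orth: "\<forall>x\<in>set (chain s v). \<forall>y\<in>set (chains Lc'). l x y = 0 \<and> l y x = 0"
    proof (intro ballI)
      fix x y assume x: "x \<in> set (chain s v)" and y: "y \<in> set (chains Lc')"
      obtain i where i: "i < s" "x = (N ^^ i) v" using x by (auto simp: in_set_chain)
      have yYp: "y \<in> Yp Y s v" using y chYp by auto
      have yx: "l y x = 0" using yYp i unfolding Yp_def[OF ctx] by simp
      have yc: "y \<in> carrier_vec n" using goodY_c[OF G] yYp sYp by auto
      have xc: "x \<in> carrier_vec n" using i Nvc[OF ctx] by simp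
      have "l x y = cnj (l y x)" using herm_sym[OF herm xc yc] .
      thus "l x y = 0 \<and> l y x = 0" using yx by simp
    qed
    have sorted: "\<forall>s'\<in>set (map fst Lc'). s' \<le> s"
    proof
      fix s' assume "s' \<in> set (map fst Lc')"
      then obtain e' v' where c': "(s', e', v') \<in> set Lc'" by auto
      have gc': "good_chain (s', e', v')" using good_list_chain[OF Lc'(1) c'] .
      have v'Y: "v' \<in> Y" using Lc'(3) c' sYp by auto
      show "s' \<le> s"
      proof (rule ccontr)
        assume "\<not> s' \<le> s"
        hence "(N ^^ (s' - 1)) v' = (N ^^ (s' - 1 - s)) ((N ^^ s) v')" by (simp add: funpow_apply_add)
        also have "\<dots> = 0\<^sub>v n" using kill v'Y Nk_zero by simp
        finally have z: "(N ^^ (s' - 1)) v' = 0\<^sub>v n" .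
        have "\<forall>i j. l ((N ^^ i) v') ((N ^^ j) v') = (if i + j = s' - 1 then e' else 0)"
          using gc' unfolding good_chain_def by simp
        hence "l ((N ^^ (s' - 1)) v') ((N ^^ 0) v') = e'" by (metis add_0_right)
        moreover have "e' \<noteq> 0" using gc' unfolding good_chain_def by auto
        moreover have "v' \<in> carrier_vec n" using goodY_c[OF G v'Y] .
        ultimately show False using z herm_zero1[OF herm] by simp
      qed
    qed
    show ?thesis
    proof (intro exI[of _ "(s, e, v) # Lc'"] conjI)
      show "good_list ((s, e, v) # Lc')" using gc orth Lc'(1) by simp
      show "sorted_wrt (\<ge>) (map fst ((s, e, v) # Lc'))" using sorted Lc'(2) by simp
      show "\<forall>c\<in>set ((s, e, v) # Lc'). snd (snd c) \<in> Y" using vY Lc'(3) sYp by auto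
      show "is_basis_of n Y (chains ((s, e, v) # Lc'))" using basis_step[OF ctx Lc'(4)] by simp
    qed
  qed
qed

lemma core_U:
  assumes nd: "\<And>u. u \<in> U \<Longrightarrow> (\<forall>w\<in>U. l u w = 0) \<Longrightarrow> u = 0\<^sub>v n"
  shows "\<exists>Lc. good_list Lc \<and> sorted_wrt (\<ge>) (map fst Lc) \<and> is_basis_of n U (chains Lc)"
proof -
  have G: "goodY U" unfolding goodY_def using sU K_U lin_onD(1)[OF linN] nd by blast
  have "\<forall>B. set B \<subseteq> U \<longrightarrow> indep n B \<longrightarrow> length B \<le> n"
    using indep_length Uc by blast
  thus ?thesis using core_ind[OF G] by blast
qed

end


lemma col_zero_mat: "j < nc \<Longrightarrow> col (0\<^sub>m nr nc :: complex mat) j = 0\<^sub>v nr"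
  by (intro eq_vecI) auto

lemma represents_four_block:
  assumes E: "set E \<subseteq> carrier_vec n" and R: "set R \<subseteq> carrier_vec n"
    and Jc: "J \<in> carrier_mat (length E) (length E)" and Cc: "C' \<in> carrier_mat (length R) (length R)"
  shows "represents_op n (E @ R) F (four_block_mat J (0\<^sub>m (length E) (length R)) (0\<^sub>m (length R) (length E)) C')
     \<longleftrightarrow> ((\<forall>i<length E. F (E ! i) = lin_comb n E (col J i)) \<and> represents_op n R F C')"
proof -
  let ?M = "four_block_mat J (0\<^sub>m (length E) (length R)) (0\<^sub>m (length R) (length E)) C'"
  have Mc: "?M \<in> carrier_mat (length (E @ R)) (length (E @ R))" using Jc Cc by auto
  have c1: "\<And>i. i < length E \<Longrightarrow> F ((E @ R) ! i) = lin_comb n (E @ R) (col ?M i)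
      \<longleftrightarrow> F (E ! i) = lin_comb n E (col J i)"
  proof -
    fix i assume i: "i < length E"
    have "col ?M i = col J i @\<^sub>v col (0\<^sub>m (length R) (length E)) i"
      using col_four_block_mat(1)[OF Jc _ _ Cc, of "0\<^sub>m (length E) (length R)" "0\<^sub>m (length R) (length E)"] i by auto
    also have "col (0\<^sub>m (length R) (length E) :: complex mat) i = 0\<^sub>v (length R)" by (rule col_zero_mat[OF i])
    finally have "lin_comb n (E @ R) (col ?M i) = lin_comb n E (col J i) + lin_comb n R (0\<^sub>v (length R))"
      using lin_comb_append_vec[of "col J i" E "0\<^sub>v (length R)" R n] Jc i by simp
    also have "\<dots> = lin_comb n E (col J i)" by simp
    finally show "F ((E @ R) ! i) = lin_comb n (E @ R) (col ?M i) \<longleftrightarrow> F (E ! i) = lin_comb n E (col J i)"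
      using i by (simp add: nth_append)
  qed
  have c2: "\<And>j. j < length R \<Longrightarrow> F ((E @ R) ! (length E + j)) = lin_comb n (E @ R) (col ?M (length E + j))
      \<longleftrightarrow> F (R ! j) = lin_comb n R (col C' j)"
  proof -
    fix j assume j: "j < length R"
    have "col ?M (length E + j) = col (0\<^sub>m (length E) (length R)) j @\<^sub>v col C' j"
      using col_four_block_mat(2)[OF Jc _ _ Cc, of "0\<^sub>m (length E) (length R)" "0\<^sub>m (length R) (length E)" "length E + j"] j
      by auto
    also have "col (0\<^sub>m (length E) (length R) :: complex mat) j = 0\<^sub>v (length E)" by (rule col_zero_mat[OF j])
    finally have "lin_comb n (E @ R) (col ?M (length E + j)) = lin_comb n E (0\<^sub>v (length E)) + lin_comb n R (col C' j)"
      using lin_comb_append_vec[of "0\<^sub>v (length E)" E "col C' j" R n] Cc j by simp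
    also have "\<dots> = lin_comb n R (col C' j)" by simp
    finally show "F ((E @ R) ! (length E + j)) = lin_comb n (E @ R) (col ?M (length E + j)) \<longleftrightarrow> F (R ! j) = lin_comb n R (col C' j)"
      by (simp add: nth_append)
  qed
  have "(\<forall>i<length (E @ R). F ((E @ R) ! i) = lin_comb n (E @ R) (col ?M i))
     \<longleftrightarrow> (\<forall>i<length E. F (E ! i) = lin_comb n E (col J i)) \<and> (\<forall>j<length R. F (R ! j) = lin_comb n R (col C' j))"
  proof
    assume a: "\<forall>i<length (E @ R). F ((E @ R) ! i) = lin_comb n (E @ R) (col ?M i)"
    show "(\<forall>i<length E. F (E ! i) = lin_comb n E (col J i)) \<and> (\<forall>j<length R. F (R ! j) = lin_comb n R (col C' j))"
    proof (intro conjI allI impI)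
      fix i assume "i < length E" thus "F (E ! i) = lin_comb n E (col J i)" using a c1 by auto
    next
      fix j assume j: "j < length R"
      thus "F (R ! j) = lin_comb n R (col C' j)" using a[rule_format, of "length E + j"] c2[OF j] by simp
    qed
  next
    assume a: "(\<forall>i<length E. F (E ! i) = lin_comb n E (col J i)) \<and> (\<forall>j<length R. F (R ! j) = lin_comb n R (col C' j))"
    show "\<forall>i<length (E @ R). F ((E @ R) ! i) = lin_comb n (E @ R) (col ?M i)"
    proof (intro allI impI)
      fix i assume i: "i < length (E @ R)"
      show "F ((E @ R) ! i) = lin_comb n (E @ R) (col ?M i)"
      proof (cases "i < length E")
        case True thus ?thesis using a c1 by auto
      next
        case False
        then obtain j where j: "i = length E + j" "j < length R" using i by (metis add_diff_inverse_nat length_append nat_add_left_cancel_less)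
        thus ?thesis using a c2 by auto
      qed
    qed
  qed
  thus ?thesis unfolding represents_op_def using Mc Cc by auto
qed

lemma jordan_matrix_Cons:
  "jordan_matrix ((s, a) # rest) = four_block_mat (jordan_block s a)
     (0\<^sub>m s (sum_list (map fst rest))) (0\<^sub>m (sum_list (map fst rest)) s) (jordan_matrix rest)"
  unfolding jordan_matrix_def by (simp add: Let_def jordan_matrix_dim[unfolded jordan_matrix_def])

lemma jordan_matrix_carrier: "jordan_matrix xs \<in> carrier_mat (sum_list (map fst xs)) (sum_list (map fst xs))"
  by (simp add: carrier_matI)

lemma col_jordan_block:
  fixes a :: complex
  assumes i: "i < s"
  shows "col (jordan_block s a) i = a \<cdot>\<^sub>v unit_vec s i + (if i = 0 then 0\<^sub>v s else unit_vec s (i - 1))"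
  using i by (intro eq_vecI) (auto simp: unit_vec_def algebra_simps)

lemma lin_comb_jordan_col:
  assumes E: "set E \<subseteq> carrier_vec n" and i: "i < length E"
  shows "lin_comb n E (col (jordan_block (length E) a) i) = a \<cdot>\<^sub>v E ! i + (if i = 0 then 0\<^sub>v n else E ! (i - 1))"
proof -
  let ?s = "length E"
  have c: "col (jordan_block (length E) a) i = a \<cdot>\<^sub>v unit_vec ?s i + (if i = 0 then 0\<^sub>v ?s else unit_vec ?s (i - 1))"
    by (rule col_jordan_block[OF i])
  have "lin_comb n E (a \<cdot>\<^sub>v unit_vec ?s i + (if i = 0 then 0\<^sub>v ?s else unit_vec ?s (i - 1)))
      = lin_comb n E (a \<cdot>\<^sub>v unit_vec ?s i) + lin_comb n E (if i = 0 then 0\<^sub>v ?s else unit_vec ?s (i - 1))"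
    by (rule lin_comb_add) auto
  also have "lin_comb n E (a \<cdot>\<^sub>v unit_vec ?s i) = a \<cdot>\<^sub>v E ! i"
    using lin_comb_smult[of "unit_vec ?s i" E n a] lin_comb_unit[OF E i] by simp
  also have "lin_comb n E (if i = 0 then 0\<^sub>v ?s else unit_vec ?s (i - 1)) = (if i = 0 then 0\<^sub>v n else E ! (i - 1))"
    using lin_comb_unit[OF E, of "i - 1"] i by auto
  finally show ?thesis unfolding c .
qed

lemma form_matrix_append:
  assumes orth: "\<forall>x\<in>set E. \<forall>y\<in>set R. l x y = 0 \<and> l y x = 0"
  shows "form_matrix l (E @ R) = four_block_mat (form_matrix l E) (0\<^sub>m (length E) (length R))
     (0\<^sub>m (length R) (length E)) (form_matrix l R)"
proof (rule eq_matI)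
  fix i j assume i: "i < dim_row (four_block_mat (form_matrix l E) (0\<^sub>m (length E) (length R))
     (0\<^sub>m (length R) (length E)) (form_matrix l R))"
    and j: "j < dim_col (four_block_mat (form_matrix l E) (0\<^sub>m (length E) (length R))
     (0\<^sub>m (length R) (length E)) (form_matrix l R))"
  have i': "i < length E + length R" and j': "j < length E + length R" using i j by (auto simp: form_matrix_def)
  show "form_matrix l (E @ R) $$ (i, j) = four_block_mat (form_matrix l E) (0\<^sub>m (length E) (length R))
     (0\<^sub>m (length R) (length E)) (form_matrix l R) $$ (i, j)"
    using i' j' orth by (auto simp: form_matrix_def nth_append)
qed (auto simp: form_matrix_def)

lemma diag_block_mat_Cons':
  "diag_block_mat (X # Xs) = four_block_mat X (0\<^sub>m (dim_row X) (dim_col (diag_block_mat Xs)))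
     (0\<^sub>m (dim_row (diag_block_mat Xs)) (dim_col X)) (diag_block_mat Xs)"
  by (simp add: Let_def)

context core begin

lemma form_chain:
  assumes gc: "good_chain (s, e, v)"
  shows "form_matrix l (chain s v) = e \<cdot>\<^sub>m S_mat s"
proof (rule eq_matI)
  have gram: "\<And>i j. l ((N ^^ i) v) ((N ^^ j) v) = (if i + j = s - 1 then e else 0)"
    using gc unfolding good_chain_def by simp
  fix i j assume "i < dim_row (e \<cdot>\<^sub>m S_mat s)" "j < dim_col (e \<cdot>\<^sub>m S_mat s)"
  hence i: "i < s" and j: "j < s" by (auto simp: S_mat_def)
  have "form_matrix l (chain s v) $$ (i, j) = l ((N ^^ (s - 1 - j)) v) ((N ^^ (s - 1 - i)) v)"
    using i j by (simp add: form_matrix_def chain_nth)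
  also have "\<dots> = (if (s - 1 - j) + (s - 1 - i) = s - 1 then e else 0)" by (rule gram)
  also have "\<dots> = (e \<cdot>\<^sub>m S_mat s) $$ (i, j)" using i j by (auto simp: S_mat_def)
  finally show "form_matrix l (chain s v) $$ (i, j) = (e \<cdot>\<^sub>m S_mat s) $$ (i, j)" .
qed (auto simp: form_matrix_def S_mat_def)

lemma form_chains:
  "good_list Lc \<Longrightarrow> form_matrix l (chains Lc) = diag_block_mat (map (\<lambda>(s, e, v). e \<cdot>\<^sub>m S_mat s) Lc)"
proof (induction Lc rule: good_list.induct)
  case 1 show ?case by (auto simp: form_matrix_def intro!: eq_matI)
next
  case (2 s e v Lc)
  have dims: "dim_row (diag_block_mat (map (\<lambda>(s, e, v). e \<cdot>\<^sub>m S_mat s) Lc)) = length (chains Lc)"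
    "dim_col (diag_block_mat (map (\<lambda>(s, e, v). e \<cdot>\<^sub>m S_mat s) Lc)) = length (chains Lc)"
    using 2 by (metis form_matrix_def dim_row_mat(1) dim_col_mat(1) good_list.simps(2))+
  have "form_matrix l (chains ((s, e, v) # Lc)) = form_matrix l (chain s v @ chains Lc)" by simp
  also have "\<dots> = four_block_mat (form_matrix l (chain s v)) (0\<^sub>m (length (chain s v)) (length (chains Lc)))
     (0\<^sub>m (length (chains Lc)) (length (chain s v))) (form_matrix l (chains Lc))"
    using 2 by (intro form_matrix_append) simp
  also have "\<dots> = four_block_mat (e \<cdot>\<^sub>m S_mat s) (0\<^sub>m s (length (chains Lc)))
     (0\<^sub>m (length (chains Lc)) s) (diag_block_mat (map (\<lambda>(s, e, v). e \<cdot>\<^sub>m S_mat s) Lc))"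
    using 2 form_chain[of s e v] by simp
  also have "\<dots> = diag_block_mat (map (\<lambda>(s, e, v). e \<cdot>\<^sub>m S_mat s) ((s, e, v) # Lc))"
    by (subst list.map(2), subst diag_block_mat_Cons') (simp only: dims prod.case, simp add: S_mat_def)
  finally show ?case .
qed

end


lemma split_vec: "c \<in> carrier_vec (a + b) \<Longrightarrow>
  c = vec a (\<lambda>i. c $ i) @\<^sub>v vec b (\<lambda>i. c $ (a + i))"
  by (intro eq_vecI) auto

lemma append_vec_eq_zero:
  assumes "x \<in> carrier_vec a" "y \<in> carrier_vec b" "x @\<^sub>v y = 0\<^sub>v (a + b)"
  shows "x = 0\<^sub>v a" "y = (0\<^sub>v b :: complex vec)"
proof -
  show "x = 0\<^sub>v a"
  proof (rule eq_vecI)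
    fix i assume "i < dim_vec (0\<^sub>v a :: complex vec)" hence i: "i < a" by simp
    have "(x @\<^sub>v y) $ i = 0" using assms(3) i by simp
    thus "x $ i = 0\<^sub>v a $ i" using assms(1,2) i by simp
  qed (use assms in simp)
  show "y = 0\<^sub>v b"
  proof (rule eq_vecI)
    fix i assume "i < dim_vec (0\<^sub>v b :: complex vec)" hence i: "i < b" by simp
    have "(x @\<^sub>v y) $ (a + i) = 0" using assms(3) i by simp
    thus "y $ i = 0\<^sub>v b $ i" using assms(1,2) i by simp
  qed (use assms in simp)
qed

lemma remove_mid:
  assumes ind: "indep n (P @ E @ R)"
  shows "indep n (P @ take a E @ R)"
  unfolding indep_def
proof (intro ballI impI)
  let ?E' = "take a E"
  let ?Z = "drop a E"
  fix c assume c: "c \<in> carrier_vec (length (P @ ?E' @ R))" and z: "lin_comb n (P @ ?E' @ R) c = 0\<^sub>v n"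
  have cc: "c \<in> carrier_vec (length P + (length ?E' + length R))" using c by simp
  define cP where "cP = vec (length P) (\<lambda>i. c $ i)"
  define cQ where "cQ = vec (length ?E' + length R) (\<lambda>i. c $ (length P + i))"
  define cE where "cE = vec (length ?E') (\<lambda>i. cQ $ i)"
  define cR where "cR = vec (length R) (\<lambda>i. cQ $ (length ?E' + i))"
  have c_eq: "c = cP @\<^sub>v (cE @\<^sub>v cR)"
  proof -
    have "c = cP @\<^sub>v cQ" unfolding cP_def cQ_def by (rule split_vec[OF cc])
    moreover have "cQ = cE @\<^sub>v cR" unfolding cE_def cR_def by (rule split_vec) (simp add: cQ_def)
    ultimately show ?thesis by simp
  qed
  have carr: "cP \<in> carrier_vec (length P)" "cE \<in> carrier_vec (length ?E')" "cR \<in> carrier_vec (length R)"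
    unfolding cP_def cE_def cR_def by auto
  have "lin_comb n (P @ ?E' @ R) c = lin_comb n P cP + (lin_comb n ?E' cE + lin_comb n R cR)"
    unfolding c_eq using carr by (simp add: lin_comb_append_vec)
  moreover have "lin_comb n (P @ (?E' @ ?Z) @ R) (cP @\<^sub>v ((cE @\<^sub>v 0\<^sub>v (length ?Z)) @\<^sub>v cR))
      = lin_comb n P cP + ((lin_comb n ?E' cE + lin_comb n ?Z (0\<^sub>v (length ?Z))) + lin_comb n R cR)"
  proof -
    have y1: "cE @\<^sub>v 0\<^sub>v (length ?Z) \<in> carrier_vec (length (?E' @ ?Z))"
      unfolding length_append by (rule append_carrier_vec[OF carr(2)]) simp
    have y2: "(cE @\<^sub>v 0\<^sub>v (length ?Z)) @\<^sub>v cR \<in> carrier_vec (length ((?E' @ ?Z) @ R))"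
      using append_carrier_vec[OF y1 carr(3)] by simp
    have "lin_comb n (P @ (?E' @ ?Z) @ R) (cP @\<^sub>v ((cE @\<^sub>v 0\<^sub>v (length ?Z)) @\<^sub>v cR))
        = lin_comb n P cP + lin_comb n ((?E' @ ?Z) @ R) ((cE @\<^sub>v 0\<^sub>v (length ?Z)) @\<^sub>v cR)"
      by (rule lin_comb_append_vec[OF carr(1) y2])
    also have "lin_comb n ((?E' @ ?Z) @ R) ((cE @\<^sub>v 0\<^sub>v (length ?Z)) @\<^sub>v cR)
        = lin_comb n (?E' @ ?Z) (cE @\<^sub>v 0\<^sub>v (length ?Z)) + lin_comb n R cR"
      by (rule lin_comb_append_vec[OF y1 carr(3)])
    also have "lin_comb n (?E' @ ?Z) (cE @\<^sub>v 0\<^sub>v (length ?Z)) = lin_comb n ?E' cE + lin_comb n ?Z (0\<^sub>v (length ?Z))"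
      by (rule lin_comb_append_vec[OF carr(2)]) simp
    finally show ?thesis .
  qed
  moreover have "lin_comb n ?Z (0\<^sub>v (length ?Z)) = 0\<^sub>v n" by (rule lin_comb_zero)
  moreover have "lin_comb n ?E' cE + 0\<^sub>v n = lin_comb n ?E' cE" by (rule right_zero_vec) simp
  ultimately have "lin_comb n (P @ (?E' @ ?Z) @ R) (cP @\<^sub>v ((cE @\<^sub>v 0\<^sub>v (length ?Z)) @\<^sub>v cR)) = 0\<^sub>v n"
    using z by (simp only:)
  hence "lin_comb n (P @ E @ R) (cP @\<^sub>v ((cE @\<^sub>v 0\<^sub>v (length ?Z)) @\<^sub>v cR)) = 0\<^sub>v n"
    by (simp only: append_take_drop_id)
  moreover have la: "length (P @ E @ R) = length P + ((length ?E' + length ?Z) + length R)"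
    by (auto simp: min_def)
  moreover have "cP @\<^sub>v ((cE @\<^sub>v 0\<^sub>v (length ?Z)) @\<^sub>v cR) \<in> carrier_vec (length P + ((length ?E' + length ?Z) + length R))"
    by (rule append_carrier_vec[OF carr(1) append_carrier_vec[OF append_carrier_vec[OF carr(2) zero_carrier_vec] carr(3)]])
  ultimately have z2: "cP @\<^sub>v ((cE @\<^sub>v 0\<^sub>v (length ?Z)) @\<^sub>v cR) = 0\<^sub>v (length P + ((length ?E' + length ?Z) + length R))"
    using ind unfolding indep_def by (metis (no_types, lifting))
  have "cP = 0\<^sub>v (length P)" using append_vec_eq_zero(1)[OF carr(1) _ z2] carr by simp
  moreover have "(cE @\<^sub>v 0\<^sub>v (length ?Z)) @\<^sub>v cR = 0\<^sub>v ((length ?E' + length ?Z) + length R)"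
    using append_vec_eq_zero(2)[OF carr(1) _ z2] carr by simp
  hence z3: "cE @\<^sub>v 0\<^sub>v (length ?Z) = 0\<^sub>v (length ?E' + length ?Z)" "cR = 0\<^sub>v (length R)"
    using append_vec_eq_zero[of "cE @\<^sub>v 0\<^sub>v (length ?Z)" "length ?E' + length ?Z" cR "length R"] carr by auto
  moreover have "cE = 0\<^sub>v (length ?E')"
    by (rule append_vec_eq_zero(1)[OF carr(2) zero_carrier_vec z3(1)])
  ultimately show "c = 0\<^sub>v (length (P @ ?E' @ R))" unfolding c_eq by (intro eq_vecI) auto
qed

fun cs :: "nat \<Rightarrow> (complex vec \<Rightarrow> complex vec) \<Rightarrow> complex vec list \<Rightarrow> nat list \<Rightarrow> bool" where
  "cs n F es [] = (es = [])"
| "cs n F es (s # ss) = (s \<le> length es \<and> (\<forall>i<s. F (es ! i) = (if i = 0 then 0\<^sub>v n else es ! (i - 1)))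
     \<and> cs n F (drop s es) ss)"

fun sel :: "nat \<Rightarrow> complex vec list \<Rightarrow> nat list \<Rightarrow> complex vec list" where
  "sel k es [] = []"
| "sel k es (s # ss) = take (s - k) es @ sel k (drop s es) ss"

lemma cs_len: "cs n F es ss \<Longrightarrow> length es = sum_list ss"
proof (induction ss arbitrary: es)
  case (Cons s ss)
  hence a: "length (drop s es) = sum_list ss" using Cons.IH[of "drop s es"] by simp
  have b: "s \<le> length es" using Cons.prems by simp
  show ?case using a b by simp
qed simp

lemma length_sel: "cs n F es ss \<Longrightarrow> length (sel k es ss) = sum_list (map (\<lambda>s. s - k) ss)"
  by (induction ss arbitrary: es) auto

lemma sel_indep: "cs n F es ss \<Longrightarrow> indep n (P @ es) \<Longrightarrow> indep n (P @ sel k es ss)"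
proof (induction ss arbitrary: es P)
  case Nil thus ?case by simp
next
  case (Cons s ss)
  have "indep n (P @ take s es @ drop s es)" using Cons.prems by simp
  hence "indep n (P @ take (s - k) (take s es) @ drop s es)" by (rule remove_mid)
  hence "indep n ((P @ take (s - k) es) @ drop s es)" by (simp add: min_def)
  hence "indep n ((P @ take (s - k) es) @ sel k (drop s es) ss)"
    using Cons.IH[of "drop s es" "P @ take (s - k) es"] Cons.prems by simp
  thus ?case by simp
qed

lemma cs_pow:
  assumes b: "\<forall>i<s. F (es ! i) = (if i = 0 then 0\<^sub>v n else es ! (i - 1))" and F0: "F (0\<^sub>v n) = 0\<^sub>v n"
  shows "i < s \<Longrightarrow> (F ^^ k) (es ! i) = (if i < k then 0\<^sub>v n else es ! (i - k))"
proof (induction k)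
  case (Suc k)
  show ?case
  proof (cases "i < k")
    case True thus ?thesis using Suc F0 by simp
  next
    case False
    have "(F ^^ Suc k) (es ! i) = F (es ! (i - k))" using Suc False by simp
    also have "\<dots> = (if i - k = 0 then 0\<^sub>v n else es ! (i - k - 1))" using b Suc.prems by simp
    finally show ?thesis using False by auto
  qed
qed simp

lemma sel_image:
  assumes "cs n F es ss" "set es \<subseteq> S" "\<forall>x\<in>S. F x \<in> S" "F (0\<^sub>v n) = 0\<^sub>v n"
  shows "set (sel k es ss) \<subseteq> (F ^^ k) ` S"
  using assms
proof (induction ss arbitrary: es)
  case (Cons s ss)
  have b: "\<forall>i<s. F (es ! i) = (if i = 0 then 0\<^sub>v n else es ! (i - 1))" and sl: "s \<le> length es"
    using Cons.prems by auto
  have "set (take (s - k) es) \<subseteq> (F ^^ k) ` S"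
  proof
    fix x assume "x \<in> set (take (s - k) es)"
    then obtain j where j: "j < s - k" "x = es ! j" using sl by (auto simp: in_set_conv_nth)
    have "(F ^^ k) (es ! (j + k)) = es ! j" using cs_pow[OF b Cons.prems(4), of "j + k" k] j by simp
    moreover have "es ! (j + k) \<in> S" using Cons.prems(2) j sl by (auto intro: nth_mem)
    ultimately show "x \<in> (F ^^ k) ` S" using j by (metis image_eqI)
  qed
  moreover have "set (sel k (drop s es) ss) \<subseteq> (F ^^ k) ` S"
    using Cons.IH Cons.prems by (meson cs.simps(2) set_drop_subset subset_trans)
  ultimately show ?case by simp
qed simp

lemma lin_on_pow'': "lin_on n S F \<Longrightarrow> lin_on n S (F ^^ k)"
  using lin_on_pow' .

lemma sel_span:
  assumes "cs n F es ss" "set es \<subseteq> S" "subsp n S" "lin_on n S F" "c \<in> carrier_vec (length es)"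
  shows "\<exists>d\<in>carrier_vec (length (sel k es ss)). lin_comb n (map (F ^^ k) es) c = lin_comb n (sel k es ss) d"
  using assms
proof (induction ss arbitrary: es c)
  case Nil thus ?case by (intro bexI[of _ "0\<^sub>v 0"]) (auto intro: eq_vecI simp: lin_comb_def)
next
  case (Cons s ss)
  note S = Cons.prems(3) and F = Cons.prems(4)
  have b: "\<forall>i<s. F (es ! i) = (if i = 0 then 0\<^sub>v n else es ! (i - 1))" and sl: "s \<le> length es"
    and csR: "cs n F (drop s es) ss" using Cons.prems by auto
  have F0: "F (0\<^sub>v n) = 0\<^sub>v n" using lin_on_zero[OF S F] .
  define E where "E = take s es"
  define R where "R = drop s es"
  have lE: "length E = s" unfolding E_def using sl by simp
  have esER: "es = E @ R" unfolding E_def R_def by simp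
  have ESc: "set E \<subseteq> carrier_vec n" "set R \<subseteq> S" using Cons.prems(2) subspD(1)[OF S]
    unfolding E_def R_def by (auto dest: in_set_takeD in_set_dropD)
  define c1 where "c1 = vec (length E) (\<lambda>i. c $ i)"
  define c2 where "c2 = vec (length R) (\<lambda>i. c $ (length E + i))"
  have c2c: "c2 \<in> carrier_vec (length R)" unfolding c2_def by simp
  obtain d2 where d2: "d2 \<in> carrier_vec (length (sel k R ss))" "lin_comb n (map (F ^^ k) R) c2 = lin_comb n (sel k R ss) d2"
    using Cons.IH[OF csR[folded R_def] ESc(2) S F c2c] by blast
  define d1 where "d1 = vec (s - k) (\<lambda>j. c1 $ (k + j))"
  have FkE: "\<And>i. i < s \<Longrightarrow> (F ^^ k) (E ! i) = (if i < k then 0\<^sub>v n else E ! (i - k))"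
    using cs_pow[OF b F0] unfolding E_def using sl by simp
  have blk: "lin_comb n (map (F ^^ k) E) c1 = lin_comb n (take (s - k) E) d1"
  proof (rule eq_vecI)
    fix t assume "t < dim_vec (lin_comb n (take (s - k) E) d1)" hence t: "t < n" by simp
    have Ec: "\<And>i. i < s \<Longrightarrow> dim_vec (E ! i) = n" using ESc(1) lE by (auto simp: nth_mem subset_iff carrier_vecD)
    have "lin_comb n (map (F ^^ k) E) c1 $ t = (\<Sum>i<s. c1 $ i * (if i < k then 0 else E ! (i - k) $ t))"
      using t lE by (simp add: lin_comb_index FkE cong: if_cong) (intro sum.cong, auto simp: FkE)
    also have "\<dots> = (\<Sum>j<s - k. c1 $ (k + j) * E ! j $ t)"
    proof (cases "s \<le> k")
      case True thus ?thesis by simp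
    next
      case False
      hence "s = k + (s - k)" by simp
      hence "(\<Sum>i<s. c1 $ i * (if i < k then 0 else E ! (i - k) $ t))
          = (\<Sum>i<k + (s - k). c1 $ i * (if i < k then 0 else E ! (i - k) $ t))" by simp
      also have "\<dots> = (\<Sum>i<k. c1 $ i * (if i < k then 0 else E ! (i - k) $ t))
          + (\<Sum>j<s - k. c1 $ (k + j) * (if k + j < k then 0 else E ! (k + j - k) $ t))"
        by (rule sum_split_add)
      finally show ?thesis by simp
    qed
    also have "\<dots> = lin_comb n (take (s - k) E) d1 $ t"
    proof -
      have lt: "length (take (s - k) E) = s - k" using lE by simp
      show ?thesis using t unfolding lin_comb_index[OF t] lt d1_def by (intro sum.cong) auto
    qed
    finally show "lin_comb n (map (F ^^ k) E) c1 $ t = lin_comb n (take (s - k) E) d1 $ t" .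
  qed simp
  have lt: "length (take (s - k) E) = s - k" using lE by simp
  have d1c: "d1 \<in> carrier_vec (length (take (s - k) E))" unfolding lt d1_def by simp
  have selq: "sel k es (s # ss) = take (s - k) E @ sel k R ss" unfolding E_def R_def by simp
  have "lin_comb n (map (F ^^ k) es) c = lin_comb n (map (F ^^ k) E) c1 + lin_comb n (map (F ^^ k) R) c2"
    unfolding esER map_append lin_comb_append c1_def c2_def by simp
  also have "\<dots> = lin_comb n (take (s - k) E) d1 + lin_comb n (sel k R ss) d2" using blk d2 by simp
  also have "\<dots> = lin_comb n (take (s - k) E @ sel k R ss) (d1 @\<^sub>v d2)"
    by (rule lin_comb_append_vec[OF d1c d2(1), symmetric])
  finally have "lin_comb n (map (F ^^ k) es) c = lin_comb n (sel k es (s # ss)) (d1 @\<^sub>v d2)" unfolding selq .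
  moreover have "d1 @\<^sub>v d2 \<in> carrier_vec (length (sel k es (s # ss)))"
    unfolding selq using append_carrier_vec[OF d1c d2(1)] by simp
  ultimately show ?case by blast
qed

lemma sel_count_le:
  assumes cs1: "cs n F es ss" and cs2: "cs n F' es' ss'"
    and S: "subsp n S" and F: "lin_on n S F" and F': "lin_on n S F'"
    and es: "set es \<subseteq> S" and es': "set es' \<subseteq> S"
    and ind: "indep n es" and span': "\<And>x. x \<in> S \<Longrightarrow> \<exists>c\<in>carrier_vec (length es'). x = lin_comb n es' c"
    and img: "(F ^^ k) ` S = (F' ^^ k) ` S"
  shows "sum_list (map (\<lambda>s. s - k) ss) \<le> sum_list (map (\<lambda>s. s - k) ss')"
proof -
  have Sc: "S \<subseteq> carrier_vec n" using subspD(1)[OF S] .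
  have F0: "F (0\<^sub>v n) = 0\<^sub>v n" using lin_on_zero[OF S F] .
  have ind1: "indep n (sel k es ss)" using sel_indep[OF cs1, of "[]" k] ind by simp
  have sub1: "set (sel k es ss) \<subseteq> (F ^^ k) ` S"
    using sel_image[OF cs1 es _ F0] lin_onD(1)[OF F] by blast
  have c1: "set (sel k es ss) \<subseteq> carrier_vec n"
    using sub1 lin_onD(1)[OF lin_on_pow'[OF F]] Sc by blast
  have c2: "set (sel k es' ss') \<subseteq> carrier_vec n"
    using sel_image[OF cs2 es' _ lin_on_zero[OF S F']] lin_onD(1)[OF F'] lin_onD(1)[OF lin_on_pow'[OF F']] Sc
    by blast
  have "length (sel k es ss) \<le> length (sel k es' ss')"
  proof (rule indep_span_le[OF c1 ind1 c2])
    fix x assume "x \<in> set (sel k es ss)"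
    hence "x \<in> (F' ^^ k) ` S" using sub1 img by auto
    then obtain y where y: "y \<in> S" "x = (F' ^^ k) y" by auto
    obtain c where c: "c \<in> carrier_vec (length es')" "y = lin_comb n es' c" using span' y(1) by blast
    have "x = lin_comb n (map (F' ^^ k) es') c" unfolding y(2) c(2)
      by (rule lin_on_lin_comb[OF S lin_on_pow'[OF F'] es'])
    thus "\<exists>c\<in>carrier_vec (length (sel k es' ss')). x = lin_comb n (sel k es' ss') c"
      using sel_span[OF cs2 es' S F' c(1), of k] by auto
  qed
  thus ?thesis using length_sel[OF cs1] length_sel[OF cs2] by simp
qed

lemma sum_minus_Suc: "sum_list (map (\<lambda>s. s - k) (xs :: nat list)) = sum_list (map (\<lambda>s. s - Suc k) xs) + length (filter (\<lambda>s. s > k) xs)"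
  by (induction xs) auto

lemma count_gt_eq:
  assumes "\<forall>k. sum_list (map (\<lambda>s. s - k) xs) = sum_list (map (\<lambda>s. s - k) (ys :: nat list))"
  shows "length (filter (\<lambda>s. s > k) xs) = length (filter (\<lambda>s. s > k) ys)"
  using assms sum_minus_Suc[of k xs] sum_minus_Suc[of k ys] by auto

lemma count_eq_filter: "length (filter (\<lambda>s. s > k) (xs :: nat list)) = length (filter (\<lambda>s. s > Suc k) xs) + count (mset xs) (Suc k)"
  by (induction xs) auto

lemma sorted_lists_eq:
  assumes sx: "sorted_wrt (\<ge>) xs" and sy: "sorted_wrt (\<ge>) (ys :: nat list)"
    and px: "\<forall>x\<in>set xs. x > 0" and py: "\<forall>y\<in>set ys. y > 0"
    and eq: "\<forall>k. sum_list (map (\<lambda>s. s - k) xs) = sum_list (map (\<lambda>s. s - k) ys)"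
  shows "xs = ys"
proof -
  have cnt: "\<And>a. count (mset xs) a = count (mset ys) a"
  proof -
    fix a show "count (mset xs) a = count (mset ys) a"
    proof (cases a)
      case 0
      have "0 \<notin> set xs" "0 \<notin> set ys" using px py by auto
      thus ?thesis using 0 by (metis count_eq_zero_iff set_mset_mset)
    next
      case (Suc k)
      thus ?thesis using count_eq_filter[of k xs] count_eq_filter[of k ys]
        count_gt_eq[OF eq, of k] count_gt_eq[OF eq, of "Suc k"] by simp
    qed
  qed
  hence "mset xs = mset ys" by (simp add: multiset_eq_iff)
  hence m: "mset (rev xs) = mset (rev ys)" by simp
  have s1: "sorted (rev xs)" using sx unfolding sorted_wrt_rev by simp
  have s2: "sorted (rev ys)" using sy unfolding sorted_wrt_rev by simp
  have a: "sort (rev ys) = rev xs" by (rule properties_for_sort[OF m s1])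
  have b: "sort (rev ys) = rev ys" by (rule sorted_sort_id[OF s2])
  have "rev xs = rev ys" using a b by simp
  thus ?thesis by simp
qed



sublocale setting \<subseteq> cr: core n l U K Nt
proof (unfold_locales)
  show "hermitian_form n l" by (rule herm)
  show "subsp n U" by (rule subsp_U)
  show "alin_on n U K" by (rule alin_K)
  show "\<And>u. u \<in> U \<Longrightarrow> K (K u) = u" by (rule K_K)
  show "\<And>u v. u \<in> U \<Longrightarrow> v \<in> U \<Longrightarrow> l (K u) v = l (K v) u" by (rule K_sa)
  show "lin_on n U Nt" by (rule lin_Nt)
  show "\<And>u. u \<in> U \<Longrightarrow> Nt (K u) = K (Nt u)" by (simp add: K_Nt)
  show "\<And>u v. u \<in> U \<Longrightarrow> v \<in> U \<Longrightarrow> l (Nt u) v = l u (Nt v)" by (rule Nt_sa)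
  show "\<And>u. u \<in> U \<Longrightarrow> (Nt ^^ n) u = 0\<^sub>v n" by (rule Nt_nilp)
qed

lemma block_sizes_Cons[simp]: "block_sizes ((s, r) # sr) = replicate r s @ block_sizes sr"
  unfolding block_sizes_def by simp

lemma block_sizes_set: "x \<in> set (block_sizes sr) \<Longrightarrow> x \<in> fst ` set sr"
  unfolding block_sizes_def by (auto split: prod.splits) (metis fst_conv rev_image_eqI)

lemma block_sizes_sorted: "sorted_wrt (>) (map fst sr) \<Longrightarrow> sorted_wrt (\<ge>) (block_sizes sr)"
proof (induction sr)
  case (Cons p sr)
  obtain s r where p: "p = (s, r)" by (cases p)
  have "\<forall>y\<in>set (block_sizes sr). y \<le> s"
    using Cons.prems block_sizes_set unfolding p by fastforce
  moreover have "sorted_wrt (\<ge>) (replicate r s)" by (simp add: sorted_wrt_iff_nth_less)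
  ultimately show ?case using Cons unfolding p by (auto simp: sorted_wrt_append)
qed (simp add: block_sizes_def)

lemma block_sizes_pos: "\<forall>p\<in>set sr. fst p > 0 \<and> snd p > 0 \<Longrightarrow> \<forall>x\<in>set (block_sizes sr). x > 0"
  using block_sizes_set by fastforce

context setting begin

lemma chains_U: "cr.good_list Lc \<Longrightarrow> set (cr.chains Lc) \<subseteq> U"
proof (induction Lc rule: cr.good_list.induct)
  case (2 s e v Lc)
  have "cr.rl v" using 2 by (simp add: cr.good_chain_def)
  hence "set (cr.chain s v) \<subseteq> U" using cr.rl_Nk unfolding cr.rl_def by (auto simp: cr.in_set_chain)
  thus ?case using 2 by simp
qed simp

lemma chains_len: "length (cr.chains Lc) = sum_list (map fst Lc)"
  by (induction Lc) (auto simp: cr.chains_def)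

lemma A_chainvec:
  assumes gc: "cr.good_chain (s, e, v)" and i: "i < s"
  shows "A (cr.chain s v ! i) = complex_of_real L \<cdot>\<^sub>v cr.chain s v ! i
     + (if i = 0 then 0\<^sub>v n else cr.chain s v ! (i - 1))"
proof -
  have rv: "cr.rl v" using gc unfolding cr.good_chain_def by simp
  have Nsv: "(Nt ^^ s) v = 0\<^sub>v n" using gc unfolding cr.good_chain_def by simp
  define x where "x = (Nt ^^ (s - 1 - i)) v"
  have xe: "cr.chain s v ! i = x" unfolding x_def using i by (simp add: cr.chain_nth)
  have rx: "cr.rl x" unfolding x_def by (rule cr.rl_Nk[OF rv])
  have xU: "x \<in> U" and Kx: "K x = x" using rx unfolding cr.rl_def by auto
  define y where "y = Nt x"
  have ry: "cr.rl y" unfolding y_def x_def using cr.rl_Nk[OF rv, of "Suc (s - 1 - i)"] by simp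
  have yU: "y \<in> U" and Ky: "K y = y" using ry unfolding cr.rl_def by auto
  have xc: "x \<in> carrier_vec n" and yc: "y \<in> carrier_vec n" using xU yU U_carrier by auto
  have ye: "y = (if i = 0 then 0\<^sub>v n else cr.chain s v ! (i - 1))"
  proof (cases "i = 0")
    case True
    have "y = (Nt ^^ Suc (s - 1 - i)) v" unfolding y_def x_def by simp
    also have "Suc (s - 1 - i) = s" using True i by simp
    finally show ?thesis using True Nsv by simp
  next
    case False
    have "y = (Nt ^^ Suc (s - 1 - i)) v" unfolding y_def x_def by simp
    also have "Suc (s - 1 - i) = s - 1 - (i - 1)" using False i by simp
    finally show ?thesis using False i by (simp add: cr.chain_nth)
  qed
  have "A x = complex_of_real L \<cdot>\<^sub>v K (R x)" by (rule A_KR[OF xU])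
  also have "R x = x + complex_of_real (1/L) \<cdot>\<^sub>v y" unfolding y_def by (rule R_Nt[OF xc])
  also have "K (x + complex_of_real (1/L) \<cdot>\<^sub>v y) = x + complex_of_real (1/L) \<cdot>\<^sub>v y"
  proof -
    have sy: "complex_of_real (1/L) \<cdot>\<^sub>v y \<in> U" using yU subspD(4)[OF subsp_U] by simp
    have "K (x + complex_of_real (1/L) \<cdot>\<^sub>v y) = K x + K (complex_of_real (1/L) \<cdot>\<^sub>v y)"
      using alin_onD(2)[OF alin_K xU sy] .
    also have "K (complex_of_real (1/L) \<cdot>\<^sub>v y) = complex_of_real (1/L) \<cdot>\<^sub>v K y"
      using alin_onD(3)[OF alin_K yU] by simp
    finally show ?thesis using Kx Ky by simp
  qed
  also have "complex_of_real L \<cdot>\<^sub>v (x + complex_of_real (1/L) \<cdot>\<^sub>v y) = complex_of_real L \<cdot>\<^sub>v x + y"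
    using xc yc L_pos by (intro eq_vecI) (auto simp: field_simps)
  finally show ?thesis unfolding xe ye .
qed

lemma represents_chains:
  "cr.good_list Lc \<Longrightarrow> represents_op n (cr.chains Lc) A (jordan_matrix (map (\<lambda>s. (s, complex_of_real L)) (map fst Lc)))"
proof (induction Lc rule: cr.good_list.induct)
  case 1 show ?case unfolding represents_op_def by (simp add: jordan_matrix_def carrier_matI)
next
  case (2 s e v Lc)
  have gc: "cr.good_chain (s, e, v)" using 2 by simp
  have Ec: "set (cr.chain s v) \<subseteq> carrier_vec n"
    using chains_U[of "[(s, e, v)]"] gc U_carrier by (auto simp: cr.chains_def)
  have Rc: "set (cr.chains Lc) \<subseteq> carrier_vec n" using chains_U 2 U_carrier by auto
  have sm: "sum_list (map fst (map (\<lambda>s. (s, complex_of_real L)) (map fst Lc))) = length (cr.chains Lc)"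
    by (simp add: chains_len comp_def)
  have jm: "jordan_matrix (map (\<lambda>s. (s, complex_of_real L)) (map fst ((s, e, v) # Lc)))
     = four_block_mat (jordan_block (length (cr.chain s v)) (complex_of_real L))
        (0\<^sub>m (length (cr.chain s v)) (length (cr.chains Lc))) (0\<^sub>m (length (cr.chains Lc)) (length (cr.chain s v)))
        (jordan_matrix (map (\<lambda>s. (s, complex_of_real L)) (map fst Lc)))"
    using jordan_matrix_Cons[of s "complex_of_real L" "map (\<lambda>s. (s, complex_of_real L)) (map fst Lc)"] sm
    by simp
  have Cc: "jordan_matrix (map (\<lambda>s. (s, complex_of_real L)) (map fst Lc)) \<in> carrier_mat (length (cr.chains Lc)) (length (cr.chains Lc))"
    using jordan_matrix_carrier sm by metis
  have blk: "\<forall>i<length (cr.chain s v). A (cr.chain s v ! i)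
      = lin_comb n (cr.chain s v) (col (jordan_block (length (cr.chain s v)) (complex_of_real L)) i)"
    using A_chainvec[OF gc] lin_comb_jordan_col[OF Ec] by simp
  show ?case unfolding cr.chains_Cons jm
    using represents_four_block[OF Ec Rc _ Cc] blk 2 by simp
qed

lemma cs_chains: "cr.good_list Lc \<Longrightarrow> cs n Nt (cr.chains Lc) (map fst Lc)"
proof (induction Lc rule: cr.good_list.induct)
  case (2 s e v Lc)
  have gc: "cr.good_chain (s, e, v)" using 2 by simp
  have Nsv: "(Nt ^^ s) v = 0\<^sub>v n" using gc unfolding cr.good_chain_def by simp
  have "\<forall>i<s. Nt ((cr.chain s v @ cr.chains Lc) ! i) = (if i = 0 then 0\<^sub>v n else (cr.chain s v @ cr.chains Lc) ! (i - 1))"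
  proof (intro allI impI)
    fix i assume i: "i < s"
    have "Nt ((cr.chain s v @ cr.chains Lc) ! i) = Nt ((Nt ^^ (s - 1 - i)) v)" using i by (simp add: nth_append cr.chain_nth)
    also have "\<dots> = (Nt ^^ Suc (s - 1 - i)) v" by simp
    also have "\<dots> = (if i = 0 then 0\<^sub>v n else (cr.chain s v @ cr.chains Lc) ! (i - 1))"
    proof (cases "i = 0")
      case True thus ?thesis using i Nsv by (simp add: Suc_pred')
    next
      case False
      hence e: "Suc (s - 1 - i) = s - 1 - (i - 1)" using i by simp
      have i1: "i - 1 < s" using i by simp
      have "(cr.chain s v @ cr.chains Lc) ! (i - 1) = cr.chain s v ! (i - 1)" using i1 by (simp add: nth_append)
      also have "\<dots> = (Nt ^^ (s - 1 - (i - 1))) v" using i1 by (simp add: cr.chain_nth)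
      finally show ?thesis using False e by simp
    qed
    finally show "Nt ((cr.chain s v @ cr.chains Lc) ! i) = (if i = 0 then 0\<^sub>v n else (cr.chain s v @ cr.chains Lc) ! (i - 1))" .
  qed
  thus ?case using 2 by simp
qed simp

lemma cs_jordan:
  assumes "set es \<subseteq> carrier_vec n"
    and "represents_op n es (\<lambda>v. A (A v)) (jordan_matrix (map (\<lambda>s. (s, mu)) bs))"
  shows "cs n T es bs"
  using assms
proof (induction bs arbitrary: es)
  case Nil
  have "jordan_matrix (map (\<lambda>s. (s, mu)) []) \<in> carrier_mat (length es) (length es)"
    using Nil.prems(2) unfolding represents_op_def by blast
  hence "length es = 0" unfolding jordan_matrix_def carrier_mat_def by simp
  thus ?case by simp
next
  case (Cons s bs)
  have len: "length es = s + sum_list bs"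
    using Cons.prems(2) unfolding represents_op_def by (auto simp: comp_def)
  define E where "E = take s es"
  define R where "R = drop s es"
  have lE: "length E = s" and lR: "length R = sum_list bs" unfolding E_def R_def using len by auto
  have esER: "es = E @ R" unfolding E_def R_def by simp
  have Ec: "set E \<subseteq> carrier_vec n" and Rc: "set R \<subseteq> carrier_vec n"
    using Cons.prems(1) unfolding E_def R_def by (auto dest: in_set_takeD in_set_dropD)
  have sm: "sum_list (map fst (map (\<lambda>s. (s, mu)) bs)) = length R" using lR by (simp add: comp_def)
  have jm: "jordan_matrix (map (\<lambda>s. (s, mu)) (s # bs))
     = four_block_mat (jordan_block (length E) mu) (0\<^sub>m (length E) (length R)) (0\<^sub>m (length R) (length E))
        (jordan_matrix (map (\<lambda>s. (s, mu)) bs))"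
    using jordan_matrix_Cons[of s mu "map (\<lambda>s. (s, mu)) bs"] sm lE by simp
  have Cc: "jordan_matrix (map (\<lambda>s. (s, mu)) bs) \<in> carrier_mat (length R) (length R)"
    using jordan_matrix_carrier sm by metis
  have rep: "(\<forall>i<length E. A (A (E ! i)) = lin_comb n E (col (jordan_block (length E) mu) i))
     \<and> represents_op n R (\<lambda>v. A (A v)) (jordan_matrix (map (\<lambda>s. (s, mu)) bs))"
    using represents_four_block[OF Ec Rc _ Cc, of "jordan_block (length E) mu" "\<lambda>v. A (A v)"] Cons.prems(2)
    unfolding esER jm by simp
  have blk: "\<forall>i<s. T (E ! i) = (if i = 0 then 0\<^sub>v n else E ! (i - 1))"
  proof (intro allI impI)
    fix i assume i: "i < s"
    have Eic: "E ! i \<in> carrier_vec n" using Ec i lE by (auto simp: nth_mem subset_iff)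
    have AA: "A (A (E ! i)) = mu \<cdot>\<^sub>v E ! i + (if i = 0 then 0\<^sub>v n else E ! (i - 1))"
      using rep lin_comb_jordan_col[OF Ec, of i mu] i lE by simp
    have prev: "(if i = 0 then 0\<^sub>v n else E ! (i - 1)) \<in> carrier_vec n"
      using Ec i lE by (auto simp: nth_mem subset_iff)
    show "T (E ! i) = (if i = 0 then 0\<^sub>v n else E ! (i - 1))"
      unfolding T_def AA using Eic prev by (intro eq_vecI) auto
  qed
  have "cs n T R bs" using Cons.IH[OF Rc] rep by simp
  thus ?case using blk lE len unfolding esER by (simp add: E_def R_def)
qed

lemma lin_T_U: "lin_on n U T"
  unfolding lin_on_def using T_U lin_onD[OF lin_T] U_carrier by auto

lemma img_eq: "(T ^^ k) ` U = (Nt ^^ k) ` U"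
proof
  show "(T ^^ k) ` U \<subseteq> (Nt ^^ k) ` U"
  proof
    fix x assume "x \<in> (T ^^ k) ` U"
    then obtain u where u: "u \<in> U" "x = (T ^^ k) u" by auto
    have "(V ^^ k) u \<in> U" unfolding V_def using polyT_pow_U u by simp
    thus "x \<in> (Nt ^^ k) ` U" using Tk_NtV[OF u(1)] u(2) by auto
  qed
  show "(Nt ^^ k) ` U \<subseteq> (T ^^ k) ` U"
  proof
    fix x assume "x \<in> (Nt ^^ k) ` U"
    then obtain u where u: "u \<in> U" "x = (Nt ^^ k) u" by auto
    have "(W ^^ k) u \<in> U" unfolding W_def using polyT_pow_U u by simp
    thus "x \<in> (T ^^ k) ` U" using Ntk_TW[OF u(1)] u(2) by auto
  qed
qed

lemma basis_span: "is_basis_of n U es \<Longrightarrow> x \<in> U \<Longrightarrow> \<exists>c\<in>carrier_vec (length es). x = lin_comb n es c"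
  unfolding is_basis_of_def by blast

lemma sizes_eq:
  assumes es0: "is_basis_of n U es0"
    and rep0: "represents_op n es0 (\<lambda>v. A (A v)) (jordan_matrix (map (\<lambda>s. (s, mu)) bs))"
    and gl: "cr.good_list Lc" and bas: "is_basis_of n U (cr.chains Lc)"
    and sbs: "sorted_wrt (\<ge>) bs" and pbs: "\<forall>x\<in>set bs. x > 0"
    and sLc: "sorted_wrt (\<ge>) (map fst Lc)"
  shows "map fst Lc = bs"
proof -
  have es0U: "set es0 \<subseteq> U" using es0 unfolding is_basis_of_def by simp
  have es0c: "set es0 \<subseteq> carrier_vec n" using es0U U_carrier by auto
  have chU: "set (cr.chains Lc) \<subseteq> U" using chains_U[OF gl] .
  have cs1: "cs n T es0 bs" by (rule cs_jordan[OF es0c rep0])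
  have cs2: "cs n Nt (cr.chains Lc) (map fst Lc)" by (rule cs_chains[OF gl])
  have ind1: "indep n es0" using basis_indep[OF es0 subspD(2)[OF subsp_U]] .
  have ind2: "indep n (cr.chains Lc)" using basis_indep[OF bas subspD(2)[OF subsp_U]] .
  have eq: "\<forall>k. sum_list (map (\<lambda>s. s - k) (map fst Lc)) = sum_list (map (\<lambda>s. s - k) bs)"
  proof
    fix k
    have "sum_list (map (\<lambda>s. s - k) bs) \<le> sum_list (map (\<lambda>s. s - k) (map fst Lc))"
      by (rule sel_count_le[OF cs1 cs2 subsp_U lin_T_U lin_Nt es0U chU ind1 basis_span[OF bas] img_eq])
    moreover have "sum_list (map (\<lambda>s. s - k) (map fst Lc)) \<le> sum_list (map (\<lambda>s. s - k) bs)"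
      by (rule sel_count_le[OF cs2 cs1 subsp_U lin_Nt lin_T_U chU es0U ind2 basis_span[OF es0] img_eq[symmetric]])
    ultimately show "sum_list (map (\<lambda>s. s - k) (map fst Lc)) = sum_list (map (\<lambda>s. s - k) bs)" by simp
  qed
  have pLc: "\<forall>x\<in>set (map fst Lc). x > 0"
    using cr.good_list_chain[OF gl] unfolding cr.good_chain_def by fastforce
  show ?thesis by (rule sorted_lists_eq[OF sLc sbs pLc pbs eq])
qed

end


theorem mainTheorem11:
  fixes n :: nat
    and l :: "complex vec \<Rightarrow> complex vec \<Rightarrow> complex"
    and A :: "complex vec \<Rightarrow> complex vec"
    and lam :: real
    and sr :: "(nat \<times> nat) list"
  assumes herm: "hermitian_form n l"
    and nondeg: "nondegenerate n l"
    and anti: "antilinear_op n A"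
    and sa: "self_adjoint_wrt n l A"
    and pos: "lam\<^sup>2 > 0"
    and eig: "\<exists>v\<in>carrier_vec n. v \<noteq> 0\<^sub>v n \<and> A (A v) = complex_of_real (lam\<^sup>2) \<cdot>\<^sub>v v"
    and sizes_pos: "\<forall>p\<in>set sr. fst p > 0 \<and> snd p > 0"
    and sizes_dec: "sorted_wrt (>) (map fst sr)"
    and jordan: "\<exists>es. is_basis_of n (gen_eigenspace n A (complex_of_real (lam\<^sup>2))) es \<and>
        represents_op n es (\<lambda>v. A (A v))
          (jordan_matrix (map (\<lambda>s. (s, complex_of_real (lam\<^sup>2))) (block_sizes sr)))"
  shows "\<exists>es eps. is_basis_of n (gen_eigenspace n A (complex_of_real (lam\<^sup>2))) es \<and>
     (\<forall>k<length (block_sizes sr). eps k \<in> {1, -1 :: complex}) \<and>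
     form_matrix l es =
       diag_block_mat (map (\<lambda>k. eps k \<cdot>\<^sub>m S_mat (block_sizes sr ! k)) [0..<length (block_sizes sr)]) \<and>
     represents_op n es A
       (jordan_matrix (map (\<lambda>s. (s, complex_of_real \<bar>lam\<bar>)) (block_sizes sr)))"
proof -
  interpret setting n l A lam by (rule setting.intro[OF herm nondeg anti sa pos])
  obtain es0 where es0: "is_basis_of n (gen_eigenspace n A (complex_of_real (lam\<^sup>2))) es0"
    and rep0: "represents_op n es0 (\<lambda>v. A (A v))
          (jordan_matrix (map (\<lambda>s. (s, complex_of_real (lam\<^sup>2))) (block_sizes sr)))"
    using jordan by blast
  have mueq: "complex_of_real (lam\<^sup>2) = mu" unfolding mu_def ..
  have Ueq: "gen_eigenspace n A (complex_of_real (lam\<^sup>2)) = U" unfolding U_def mu_def ..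
  have nd: "\<And>u. u \<in> U \<Longrightarrow> \<forall>w\<in>U. l u w = 0 \<Longrightarrow> u = 0\<^sub>v n" using nondeg_U by blast
  obtain Lc where gl: "cr.good_list Lc" and sLc: "sorted_wrt (\<ge>) (map fst Lc)"
    and bas: "is_basis_of n U (cr.chains Lc)"
    using cr.core_U[OF nd] by blast
  have bseq: "map fst Lc = block_sizes sr"
    by (rule sizes_eq[OF es0[unfolded Ueq] rep0[unfolded mueq] gl bas
          block_sizes_sorted[OF sizes_dec] block_sizes_pos[OF sizes_pos] sLc])
  have lenq: "length (block_sizes sr) = length Lc" using bseq[symmetric] by simp
  define eps where "eps = (\<lambda>k. fst (snd (Lc ! k)))"
  show ?thesis
  proof (intro exI[of _ "cr.chains Lc"] exI[of _ eps] conjI)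
    show "is_basis_of n (gen_eigenspace n A (complex_of_real (lam\<^sup>2))) (cr.chains Lc)"
      unfolding Ueq by (rule bas)
    show "\<forall>k<length (block_sizes sr). eps k \<in> {1, -1 :: complex}"
    proof (intro allI impI)
      fix k assume "k < length (block_sizes sr)"
      hence k: "k < length Lc" using lenq by simp
      obtain s e v where c: "Lc ! k = (s, e, v)" by (cases "Lc ! k") auto
      have "cr.good_chain (s, e, v)" using cr.good_list_chain[OF gl] k c by (metis nth_mem)
      hence "e = 1 \<or> e = -1" unfolding cr.good_chain_def by simp
      thus "eps k \<in> {1, -1 :: complex}" unfolding eps_def c by auto
    qed
    have lst: "map (\<lambda>k. eps k \<cdot>\<^sub>m S_mat (block_sizes sr ! k)) [0..<length (block_sizes sr)]
        = map (\<lambda>(s, e, v). e \<cdot>\<^sub>m S_mat s) Lc"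
    proof (rule nth_equalityI)
      show "length (map (\<lambda>k. eps k \<cdot>\<^sub>m S_mat (block_sizes sr ! k)) [0..<length (block_sizes sr)])
        = length (map (\<lambda>(s, e, v). e \<cdot>\<^sub>m S_mat s) Lc)" using lenq by simp
    next
      fix k assume "k < length (map (\<lambda>k. eps k \<cdot>\<^sub>m S_mat (block_sizes sr ! k)) [0..<length (block_sizes sr)])"
      hence k: "k < length Lc" using lenq by simp
      obtain s e v where c: "Lc ! k = (s, e, v)" by (cases "Lc ! k") auto
      have "block_sizes sr ! k = s" using bseq[symmetric] k c by simp
      thus "map (\<lambda>k. eps k \<cdot>\<^sub>m S_mat (block_sizes sr ! k)) [0..<length (block_sizes sr)] ! k
        = map (\<lambda>(s, e, v). e \<cdot>\<^sub>m S_mat s) Lc ! k" using k lenq c unfolding eps_def by simp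
    qed
    show "form_matrix l (cr.chains Lc) =
       diag_block_mat (map (\<lambda>k. eps k \<cdot>\<^sub>m S_mat (block_sizes sr ! k)) [0..<length (block_sizes sr)])"
      unfolding lst by (rule cr.form_chains[OF gl])
    show "represents_op n (cr.chains Lc) A
       (jordan_matrix (map (\<lambda>s. (s, complex_of_real \<bar>lam\<bar>)) (block_sizes sr)))"
      using represents_chains[OF gl] unfolding bseq L_def .
  qed
qed



end
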